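(* For any regulatory network $\mathbf{RN}$, the geometric parameter graph $\mathsf{GPG}$ is connected.
   Context: Regulatory network: $\mathbf{RN}=(V,E)$, $V=\{1,\dots,N\}$. Each edge is an ordered pair $(i,j)$ annotated as an activation $i\to j$ or a repression $i\dashv j$. There is at most one edge per ordered pair, and there is no $i\dashv i$. Set $\mathbf S(n)=\{i:(i,n)\in E\}$ and $\mathbf T(n)=\{j:(n,j)\in E\}$. Each node $j$ carries a logical AND/OR expression (no negations) using each variable of $\mathbf S(j)$ exactly once. $M_j$ is the polynomial obtained by AND $\mapsto$ product and OR $\mapsto$ sum. Parameters: $z=(l,u,\theta,\gamma)\in\mathbb R^D$, $D=N+3\#E$, consisting of $l_{j,i},u_{j,i},\theta_{j,i}$ for each edge $(i,j)$ and $\gamma_i$ for each node. Set $\bar Z=\{z\in[0,\infty)^D: l_{j,i}\le u_{j,i}\}$. Switching nonlinearity: $\sigma_{j,i}(x)=l_{j,i}$ if ($i\to j$, $x_i<\theta_{j,i}$) or ($i\dashv j$, $x_i>\theta_{j,i}$). It equals $u_{j,i}$ if ($i\to j$, $x_i>\theta_{j,i}$) or ($i\dashv j$, $x_i<\theta_{j,i}$). Set $\Lambda_j(x)=M_j((\sigma_{j,i}(x))_{i\in\mathbf S(j)})$. Fundamental cells: with $\theta_{-\infty,i}=0$ and $\theta_{\infty,i}=\infty$, a fundamental cell is $\kappa=\prod_i(\theta_{a_i,i},\theta_{b_i,i})$ with consecutive thresholds among $\{\theta_{j,i}:j\in\mathbf T(i)\cup\{\pm\infty\}\}$. $\Lambda(\kappa)$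 is the constant value of $\Lambda$ on $\kappa$. $\theta_{j,i}$ defines a face of $\kappa$ if $j\in\{a_i,b_i\}\cap V$. Regular parameters: $z$ is regular ($z\in Z$) if - $0<l_{j,i}<u_{j,i}$, $\gamma_i>0$ and $\theta_{j,i}>0$; - the thresholds $\theta_{j,i}$, $j\in\mathbf T(i)$, are distinct for each $i$; - $\Lambda_i(\kappa)\neq\gamma_i\theta_{j,i}$ whenever $\theta_{j,i}$ defines a face of $\kappa$. The relevant equalities are - $l_{j,i}=u_{j,i}$, $\gamma_i=0$, $\theta_{j,i}=0$, $l_{j,i}=0$, $u_{j,i}=0$; - $\theta_{j,i}=\theta_{j',i}$ ($j\ne j'\in\mathbf T(i)$); - $\gamma_i\theta_{j,i}=\Lambda_i(\kappa)$ with $\theta_{j,i}$ defining a face of $\kappa$. A point of $\bar Z$ is $1$-deficient if exactly one of these holds. $\mathsf{GPG}$: its vertices are the connected components of $Z$. Two components are adjacent if the intersection of their closures in $\bar Z$ contains a $1$-deficient point. *)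

theory Defs
  imports "HOL-Analysis.Analysis"
begin

section \<open>Regulatory networks\<close>

text \<open>Nodes are V = {1..N}; edges E are ordered pairs (i,j) meaning an edge from i to j;
  act (i,j) = True means activation i -> j, False means repression i -| j.\<close>

datatype lexpr = Var nat | AndE lexpr lexpr | OrE lexpr lexpr

fun lvars :: "lexpr \<Rightarrow> nat list" where
  "lvars (Var k) = [k]"
| "lvars (AndE a b) = lvars a @ lvars b"
| "lvars (OrE a b) = lvars a @ lvars b"

fun evalM :: "lexpr \<Rightarrow> (nat \<Rightarrow> real) \<Rightarrow> real" where
  "evalM (Var k) v = v k"
| "evalM (AndE a b) v = evalM a v * evalM b v"
| "evalM (OrE a b) v = evalM a v + evalM b v"

definition nodes :: "nat \<Rightarrow> nat set" where
  "nodes N = {1..N}"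

definition Src :: "(nat \<times> nat) set \<Rightarrow> nat \<Rightarrow> nat set" where
  "Src E n = {i. (i, n) \<in> E}"

definition Tgt :: "(nat \<times> nat) set \<Rightarrow> nat \<Rightarrow> nat set" where
  "Tgt E n = {j. (n, j) \<in> E}"

definition wf_network ::
  "nat \<Rightarrow> (nat \<times> nat) set \<Rightarrow> (nat \<times> nat \<Rightarrow> bool) \<Rightarrow> (nat \<Rightarrow> lexpr) \<Rightarrow> bool" where
  "wf_network N E act ex \<longleftrightarrow>
     E \<subseteq> nodes N \<times> nodes N \<and>
     (\<forall>i. (i, i) \<in> E \<longrightarrow> act (i, i)) \<and>
     (\<forall>j\<in>nodes N. distinct (lvars (ex j)) \<and> set (lvars (ex j)) = Src E j)"

section \<open>Parameter space\<close>

text \<open>Coordinates: Lp j i = l_{j,i}, Up j i = u_{j,i}, Th j i = theta_{j,i} (for an edge (i,j)),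
  Ga i = gamma_i.  A parameter is a function on these indices which vanishes outside the
  D = N + 3 #E relevant indices; with the product topology this subspace is R^D.\<close>

datatype pidx = Lp nat nat | Up nat nat | Th nat nat | Ga nat

type_synonym param = "pidx \<Rightarrow> real"

definition pindex :: "nat \<Rightarrow> (nat \<times> nat) set \<Rightarrow> pidx set" where
  "pindex N E = {Lp j i | i j. (i, j) \<in> E} \<union> {Up j i | i j. (i, j) \<in> E}
               \<union> {Th j i | i j. (i, j) \<in> E} \<union> {Ga i | i. i \<in> nodes N}"

definition pspace :: "nat \<Rightarrow> (nat \<times> nat) set \<Rightarrow> param set" where
  "pspace N E = {z. \<forall>k. k \<notin> pindex N E \<longrightarrow> z k = 0}"

definition Zbar :: "nat \<Rightarrow> (nat \<times> nat) set \<Rightarrow> param set" where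
  "Zbar N E = {z \<in> pspace N E. (\<forall>k\<in>pindex N E. 0 \<le> z k) \<and>
                 (\<forall>(i, j)\<in>E. z (Lp j i) \<le> z (Up j i))}"

text \<open>sig_upper act z j i x: sigma_{j,i}(x) takes the value u_{j,i}
  (the value at x_i = theta_{j,i} is irrelevant and chosen arbitrarily).\<close>
definition sig_upper :: "(nat \<times> nat \<Rightarrow> bool) \<Rightarrow> param \<Rightarrow> nat \<Rightarrow> nat \<Rightarrow> (nat \<Rightarrow> real) \<Rightarrow> bool" where
  "sig_upper act z j i x =
     (if act (i, j) then \<not> x i < z (Th j i) else \<not> x i > z (Th j i))"

definition sigma :: "(nat \<times> nat \<Rightarrow> bool) \<Rightarrow> param \<Rightarrow> nat \<Rightarrow> nat \<Rightarrow> (nat \<Rightarrow> real) \<Rightarrow> real" where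
  "sigma act z j i x = (if sig_upper act z j i x then z (Up j i) else z (Lp j i))"

definition Lambda :: "(nat \<times> nat \<Rightarrow> bool) \<Rightarrow> (nat \<Rightarrow> lexpr) \<Rightarrow> param \<Rightarrow> nat \<Rightarrow> (nat \<Rightarrow> real) \<Rightarrow> real" where
  "Lambda act ex z j x = evalM (ex j) (\<lambda>i. sigma act z j i x)"

section \<open>Fundamental cells\<close>

text \<open>A cell is given by index choices a i (lower) and b i (upper) for each node i:
  NInf stands for theta_{-inf,i} = 0, PInf for theta_{inf,i} = inf, Fin j for theta_{j,i}.\<close>

datatype tidx = NInf | Fin nat | PInf

definition thr :: "param \<Rightarrow> nat \<Rightarrow> tidx \<Rightarrow> ereal" where
  "thr z i t = (case t of NInf \<Rightarrow> 0 | Fin j \<Rightarrow> ereal (z (Th j i)) | PInf \<Rightarrow> \<infinity>)"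

definition is_cell :: "nat \<Rightarrow> (nat \<times> nat) set \<Rightarrow> param \<Rightarrow> (nat \<Rightarrow> tidx) \<Rightarrow> (nat \<Rightarrow> tidx) \<Rightarrow> bool" where
  "is_cell N E z a b \<longleftrightarrow>
     (\<forall>i\<in>nodes N.
        a i \<in> insert NInf (Fin ` Tgt E i) \<and> b i \<in> insert PInf (Fin ` Tgt E i) \<and>
        thr z i (a i) < thr z i (b i) \<and>
        (\<forall>k\<in>Tgt E i. \<not> (thr z i (a i) < ereal (z (Th k i)) \<and> ereal (z (Th k i)) < thr z i (b i)))) \<and>
     (\<forall>i. i \<notin> nodes N \<longrightarrow> a i = NInf \<and> b i = PInf)"

definition box :: "nat \<Rightarrow> param \<Rightarrow> (nat \<Rightarrow> tidx) \<Rightarrow> (nat \<Rightarrow> tidx) \<Rightarrow> (nat \<Rightarrow> real) set" where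
  "box N z a b = {x. \<forall>i\<in>nodes N. thr z i (a i) < ereal (x i) \<and> ereal (x i) < thr z i (b i)}"

text \<open>Lambda_j(kappa): the (constant) value of Lambda_j on the cell.\<close>
definition cell_Lambda ::
  "nat \<Rightarrow> (nat \<times> nat \<Rightarrow> bool) \<Rightarrow> (nat \<Rightarrow> lexpr) \<Rightarrow> param \<Rightarrow> (nat \<Rightarrow> tidx) \<Rightarrow> (nat \<Rightarrow> tidx) \<Rightarrow> nat \<Rightarrow> real" where
  "cell_Lambda N act ex z a b j = Lambda act ex z j (SOME x. x \<in> box N z a b)"

text \<open>Which inputs of node j take their upper value u_{j,k} on the cell; this determines
  Lambda_j(kappa) as a polynomial in the l's and u's.\<close>
definition cell_pattern ::
  "nat \<Rightarrow> (nat \<times> nat) set \<Rightarrow> (nat \<times> nat \<Rightarrow> bool) \<Rightarrow> param \<Rightarrow> (nat \<Rightarrow> tidx) \<Rightarrow> (nat \<Rightarrow> tidx) \<Rightarrow> nat \<Rightarrow> nat \<Rightarrow> bool" where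
  "cell_pattern N E act z a b j =
     (\<lambda>k. k \<in> Src E j \<and> sig_upper act z j k (SOME x. x \<in> box N z a b))"

definition face :: "(nat \<Rightarrow> tidx) \<Rightarrow> (nat \<Rightarrow> tidx) \<Rightarrow> nat \<Rightarrow> nat \<Rightarrow> bool" where
  "face a b j i \<longleftrightarrow> a i = Fin j \<or> b i = Fin j"

definition regular ::
  "nat \<Rightarrow> (nat \<times> nat) set \<Rightarrow> (nat \<times> nat \<Rightarrow> bool) \<Rightarrow> (nat \<Rightarrow> lexpr) \<Rightarrow> param \<Rightarrow> bool" where
  "regular N E act ex z \<longleftrightarrow>
     z \<in> pspace N E \<and>
     (\<forall>(i, j)\<in>E. 0 < z (Lp j i) \<and> z (Lp j i) < z (Up j i) \<and> 0 < z (Th j i)) \<and>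
     (\<forall>i\<in>nodes N. 0 < z (Ga i)) \<and>
     (\<forall>i\<in>nodes N. \<forall>j\<in>Tgt E i. \<forall>j'\<in>Tgt E i. j \<noteq> j' \<longrightarrow> z (Th j i) \<noteq> z (Th j' i)) \<and>
     (\<forall>i\<in>nodes N. \<forall>j\<in>Tgt E i. \<forall>a b. is_cell N E z a b \<and> face a b j i \<longrightarrow>
        cell_Lambda N act ex z a b i \<noteq> z (Ga i) * z (Th j i))"

definition Zreg ::
  "nat \<Rightarrow> (nat \<times> nat) set \<Rightarrow> (nat \<times> nat \<Rightarrow> bool) \<Rightarrow> (nat \<Rightarrow> lexpr) \<Rightarrow> param set" where
  "Zreg N E act ex = {z. regular N E act ex z}"

section \<open>Relevant equalities and 1-deficient points\<close>

text \<open>Labels of the relevant equalities: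
  EqLU i j : l_{j,i} = u_{j,i};  EqG i : gamma_i = 0;  EqTh0 i j : theta_{j,i} = 0;
  EqL0 i j : l_{j,i} = 0;  EqU0 i j : u_{j,i} = 0;
  EqThTh i j j' (j < j') : theta_{j,i} = theta_{j',i};
  EqFace i j s : gamma_i theta_{j,i} = Lambda_i(kappa), where s records which inputs of i
  take their upper value on kappa (so distinct labels are distinct equations).\<close>

datatype releq = EqLU nat nat | EqG nat | EqTh0 nat nat | EqL0 nat nat | EqU0 nat nat
  | EqThTh nat nat nat | EqFace nat nat "nat \<Rightarrow> bool"

definition holding_eqs ::
  "nat \<Rightarrow> (nat \<times> nat) set \<Rightarrow> (nat \<times> nat \<Rightarrow> bool) \<Rightarrow> (nat \<Rightarrow> lexpr) \<Rightarrow> param \<Rightarrow> releq set" where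
  "holding_eqs N E act ex z =
     {EqLU i j | i j. (i, j) \<in> E \<and> z (Lp j i) = z (Up j i)} \<union>
     {EqG i | i. i \<in> nodes N \<and> z (Ga i) = 0} \<union>
     {EqTh0 i j | i j. (i, j) \<in> E \<and> z (Th j i) = 0} \<union>
     {EqL0 i j | i j. (i, j) \<in> E \<and> z (Lp j i) = 0} \<union>
     {EqU0 i j | i j. (i, j) \<in> E \<and> z (Up j i) = 0} \<union>
     {EqThTh i j j' | i j j'. j \<in> Tgt E i \<and> j' \<in> Tgt E i \<and> j < j' \<and> z (Th j i) = z (Th j' i)} \<union>
     {EqFace i j s | i j s. i \<in> nodes N \<and> j \<in> Tgt E i \<and>
        (\<exists>a b. is_cell N E z a b \<and> face a b j i \<and> cell_pattern N E act z a b i = s \<and>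
               z (Ga i) * z (Th j i) = cell_Lambda N act ex z a b i)}"

definition one_deficient ::
  "nat \<Rightarrow> (nat \<times> nat) set \<Rightarrow> (nat \<times> nat \<Rightarrow> bool) \<Rightarrow> (nat \<Rightarrow> lexpr) \<Rightarrow> param \<Rightarrow> bool" where
  "one_deficient N E act ex z \<longleftrightarrow>
     z \<in> Zbar N E \<and> (\<exists>e. holding_eqs N E act ex z = {e})"

section \<open>The geometric parameter graph\<close>

definition GPG_vertices ::
  "nat \<Rightarrow> (nat \<times> nat) set \<Rightarrow> (nat \<times> nat \<Rightarrow> bool) \<Rightarrow> (nat \<Rightarrow> lexpr) \<Rightarrow> param set set" where
  "GPG_vertices N E act ex =
     {connected_component_set (Zreg N E act ex) z | z. z \<in> Zreg N E act ex}"

text \<open>The closure of C in Zbar is closure C \<inter> Zbar.\<close>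
definition GPG_adj ::
  "nat \<Rightarrow> (nat \<times> nat) set \<Rightarrow> (nat \<times> nat \<Rightarrow> bool) \<Rightarrow> (nat \<Rightarrow> lexpr) \<Rightarrow> param set \<Rightarrow> param set \<Rightarrow> bool" where
  "GPG_adj N E act ex C1 C2 \<longleftrightarrow>
     (\<exists>z \<in> closure C1 \<inter> closure C2 \<inter> Zbar N E. one_deficient N E act ex z)"

definition GPG_connected ::
  "nat \<Rightarrow> (nat \<times> nat) set \<Rightarrow> (nat \<times> nat \<Rightarrow> bool) \<Rightarrow> (nat \<Rightarrow> lexpr) \<Rightarrow> bool" where
  "GPG_connected N E act ex \<longleftrightarrow>
     GPG_vertices N E act ex \<noteq> {} \<and>
     (\<forall>C1\<in>GPG_vertices N E act ex. \<forall>C2\<in>GPG_vertices N E act ex.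
        (\<lambda>A B. A \<in> GPG_vertices N E act ex \<and> B \<in> GPG_vertices N E act ex \<and>
               GPG_adj N E act ex A B)\<^sup>*\<^sup>* C1 C2)"

end

theory Submission
  imports Defs
begin

lemma evalM_cong: "(\<forall>k\<in>set (lvars e). v k = w k) \<Longrightarrow> evalM e v = evalM e w"
  by (induction e) auto

lemma evalM_nonneg: "(\<forall>k\<in>set (lvars e). 0 \<le> v k) \<Longrightarrow> 0 \<le> evalM e v"
  by (induction e) auto

lemma evalM_pos: "(\<forall>k\<in>set (lvars e). 0 < v k) \<Longrightarrow> 0 < evalM e v"
  by (induction e) auto

lemma evalM_mono: "(\<forall>k\<in>set (lvars e). 0 \<le> v k \<and> v k \<le> w k) \<Longrightarrow> evalM e v \<le> evalM e w"
proof (induction e)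
  case (AndE a b)
  have h1: "evalM a v \<le> evalM a w" using AndE by simp
  have h2: "evalM b v \<le> evalM b w" using AndE by simp
  have h3: "0 \<le> evalM a w" using AndE.prems by (intro evalM_nonneg) (auto intro: order.trans)
  have h4: "0 \<le> evalM b v" using AndE.prems by (intro evalM_nonneg) auto
  show ?case using mult_mono[OF h1 h2 h3 h4] by simp
qed auto

lemma aff_mult1: "(B + x*(C-B)) * D = B*D + x*(C*D - B*D)" for B C D x :: real
  by (simp add: algebra_simps)
lemma aff_mult2: "D * (B + x*(C-B)) = D*B + x*(D*C - D*B)" for B C D x :: real
  by (simp add: algebra_simps)
lemma aff_add1: "(B + x*(C-B)) + D = (B+D) + x*((C+D) - (B+D))" for B C D x :: real
  by (simp add: algebra_simps)
lemma aff_add2: "D + (B + x*(C-B)) = (D+B) + x*((D+C) - (D+B))" for B C D x :: real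
  by (simp add: algebra_simps)

lemma evalM_affine:
  "distinct (lvars e) \<Longrightarrow> evalM e (v(k:=a + x)) = evalM e (v(k:=a)) + x * (evalM e (v(k:=a+1)) - evalM e (v(k:=a)))"
proof (induction e)
  case (Var k')
  then show ?case by auto
next
  case (AndE e1 e2)
  have d: "set (lvars e1) \<inter> set (lvars e2) = {}" "distinct (lvars e1)" "distinct (lvars e2)"
    using AndE.prems by auto
  show ?case
  proof (cases "k \<in> set (lvars e1)")
    case True
    then have "k \<notin> set (lvars e2)" using d by auto
    then have c: "\<And>c. evalM e2 (v(k:=c)) = evalM e2 v" by (intro evalM_cong) auto
    show ?thesis by (simp only: evalM.simps c AndE.IH(1)[OF d(2)] aff_mult1)
  next
    case False
    then have c: "\<And>c. evalM e1 (v(k:=c)) = evalM e1 v" by (intro evalM_cong) auto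
    show ?thesis by (simp only: evalM.simps c AndE.IH(2)[OF d(3)] aff_mult2)
  qed
next
  case (OrE e1 e2)
  have d: "set (lvars e1) \<inter> set (lvars e2) = {}" "distinct (lvars e1)" "distinct (lvars e2)"
    using OrE.prems by auto
  show ?case
  proof (cases "k \<in> set (lvars e1)")
    case True
    then have "k \<notin> set (lvars e2)" using d by auto
    then have c: "\<And>c. evalM e2 (v(k:=c)) = evalM e2 v" by (intro evalM_cong) auto
    show ?thesis by (simp only: evalM.simps c OrE.IH(1)[OF d(2)] aff_add1)
  next
    case False
    then have c: "\<And>c. evalM e1 (v(k:=c)) = evalM e1 v" by (intro evalM_cong) auto
    show ?thesis by (simp only: evalM.simps c OrE.IH(2)[OF d(3)] aff_add2)
  qed
qed

lemma evalM_strict: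
  "distinct (lvars e) \<Longrightarrow> k \<in> set (lvars e) \<Longrightarrow> \<forall>k'\<in>set (lvars e). 0 < v k' \<Longrightarrow> 0 < a \<Longrightarrow>
   evalM e (v(k:=a)) < evalM e (v(k:=a+1))"
proof (induction e)
  case (Var k')
  then show ?case by auto
next
  case (AndE e1 e2)
  have d: "set (lvars e1) \<inter> set (lvars e2) = {}" "distinct (lvars e1)" "distinct (lvars e2)"
    using AndE.prems by auto
  show ?case
  proof (cases "k \<in> set (lvars e1)")
    case True
    then have "k \<notin> set (lvars e2)" using d by auto
    then have c: "\<And>c. evalM e2 (v(k:=c)) = evalM e2 v" by (intro evalM_cong) auto
    have p: "0 < evalM e2 v" using AndE.prems by (intro evalM_pos) auto
    have "evalM e1 (v(k:=a)) < evalM e1 (v(k:=a+1))"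
      by (rule AndE.IH(1)[OF d(2) True]) (use AndE.prems in auto)
    then show ?thesis by (simp only: evalM.simps c) (rule mult_strict_right_mono[OF _ p])
  next
    case False
    then have k2: "k \<in> set (lvars e2)" using AndE.prems by auto
    have c: "\<And>c. evalM e1 (v(k:=c)) = evalM e1 v" using False by (intro evalM_cong) auto
    have p: "0 < evalM e1 v" using AndE.prems by (intro evalM_pos) auto
    have "evalM e2 (v(k:=a)) < evalM e2 (v(k:=a+1))"
      by (rule AndE.IH(2)[OF d(3) k2]) (use AndE.prems in auto)
    then show ?thesis by (simp only: evalM.simps c) (rule mult_strict_left_mono[OF _ p])
  qed
next
  case (OrE e1 e2)
  have d: "set (lvars e1) \<inter> set (lvars e2) = {}" "distinct (lvars e1)" "distinct (lvars e2)"
    using OrE.prems by auto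
  show ?case
  proof (cases "k \<in> set (lvars e1)")
    case True
    then have "k \<notin> set (lvars e2)" using d by auto
    then have c: "\<And>c. evalM e2 (v(k:=c)) = evalM e2 v" by (intro evalM_cong) auto
    have "evalM e1 (v(k:=a)) < evalM e1 (v(k:=a+1))"
      by (rule OrE.IH(1)[OF d(2) True]) (use OrE.prems in auto)
    then show ?thesis by (simp only: evalM.simps c)
  next
    case False
    then have k2: "k \<in> set (lvars e2)" using OrE.prems by auto
    have c: "\<And>c. evalM e1 (v(k:=c)) = evalM e1 v" using False by (intro evalM_cong) auto
    have "evalM e2 (v(k:=a)) < evalM e2 (v(k:=a+1))"
      by (rule OrE.IH(2)[OF d(3) k2]) (use OrE.prems in auto)
    then show ?thesis by (simp only: evalM.simps c)
  qed
qed



definition pos :: "nat \<Rightarrow> (nat \<times> nat) set \<Rightarrow> param \<Rightarrow> bool" where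
  "pos N E z \<longleftrightarrow> (\<forall>(i,j)\<in>E. 0 < z (Lp j i) \<and> z (Lp j i) < z (Up j i) \<and> 0 < z (Th j i)) \<and>
     (\<forall>i\<in>nodes N. 0 < z (Ga i))"

definition val :: "param \<Rightarrow> nat \<Rightarrow> (nat \<Rightarrow> bool) \<Rightarrow> nat \<Rightarrow> real" where
  "val z i s = (\<lambda>k. if s k then z (Up i k) else z (Lp i k))"

definition LamS :: "(nat \<Rightarrow> lexpr) \<Rightarrow> param \<Rightarrow> nat \<Rightarrow> (nat \<Rightarrow> bool) \<Rightarrow> real" where
  "LamS ex z i s = evalM (ex i) (val z i s)"

definition Pat :: "(nat \<times> nat) set \<Rightarrow> nat \<Rightarrow> (nat \<Rightarrow> bool) set" where
  "Pat E i = {s. \<forall>k. s k \<longrightarrow> k \<in> Src E i}"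

locale net =
  fixes N :: nat and E :: "(nat \<times> nat) set"
    and act :: "nat \<times> nat \<Rightarrow> bool" and ex :: "nat \<Rightarrow> lexpr"
  assumes wf: "wf_network N E act ex"
begin

lemma E_sub: "E \<subseteq> nodes N \<times> nodes N" using wf by (simp add: wf_network_def)

lemma finE: "finite E"
  by (rule finite_subset[OF E_sub]) (simp add: nodes_def)

lemma fin_Src: "finite (Src E i)"
proof -
  have "Src E i \<subseteq> nodes N" using E_sub by (auto simp: Src_def)
  then show ?thesis by (rule finite_subset) (simp add: nodes_def)
qed

lemma fin_Tgt: "finite (Tgt E i)"
proof -
  have "Tgt E i \<subseteq> nodes N" using E_sub by (auto simp: Tgt_def)
  then show ?thesis by (rule finite_subset) (simp add: nodes_def)
qed

lemma Tgt_node: "j \<in> Tgt E i \<Longrightarrow> i \<in> nodes N \<and> j \<in> nodes N \<and> (i, j) \<in> E"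
  using E_sub by (auto simp: Tgt_def)

lemma Src_node: "k \<in> Src E i \<Longrightarrow> i \<in> nodes N \<and> k \<in> nodes N \<and> (k, i) \<in> E"
  using E_sub by (auto simp: Src_def)

lemma fin_Pat: "finite (Pat E i)"
proof -
  have "Pat E i \<subseteq> (\<lambda>A k. k \<in> A) ` Pow (Src E i)"
  proof
    fix s assume "s \<in> Pat E i"
    then show "s \<in> (\<lambda>A k. k \<in> A) ` Pow (Src E i)"
      by (intro image_eqI[of _ _ "{k. s k}"]) (auto simp: Pat_def)
  qed
  then show ?thesis using fin_Src finite_subset by blast
qed

lemma lv: "i \<in> nodes N \<Longrightarrow> set (lvars (ex i)) = Src E i"
  "i \<in> nodes N \<Longrightarrow> distinct (lvars (ex i))"
  using wf by (auto simp: wf_network_def)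

lemma cell_Lambda_eq:
  "i \<in> nodes N \<Longrightarrow> cell_Lambda N act ex z a b i = LamS ex z i (cell_pattern N E act z a b i)"
  unfolding cell_Lambda_def LamS_def Lambda_def
  by (rule evalM_cong) (auto simp: lv sigma_def val_def cell_pattern_def)

lemma pattern_Pat: "cell_pattern N E act z a b i \<in> Pat E i"
  by (simp add: cell_pattern_def Pat_def)

lemma REG:
  assumes "z \<in> pspace N E" "pos N E z" "holding_eqs N E act ex z = {}"
  shows "regular N E act ex z"
proof -
  have d: "z (Th j i) \<noteq> z (Th j' i)"
    if "i \<in> nodes N" "j \<in> Tgt E i" "j' \<in> Tgt E i" "j \<noteq> j'" for i j j'
  proof
    assume h: "z (Th j i) = z (Th j' i)"
    show False
    proof (cases "j < j'")
      case True
      then have "EqThTh i j j' \<in> holding_eqs N E act ex z" using that h unfolding holding_eqs_def by blast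
      then show False using assms(3) by simp
    next
      case False
      then have "j' < j" using that by simp
      then have "EqThTh i j' j \<in> holding_eqs N E act ex z" using that h unfolding holding_eqs_def by force
      then show False using assms(3) by simp
    qed
  qed
  have f: "cell_Lambda N act ex z a b i \<noteq> z (Ga i) * z (Th j i)"
    if "i \<in> nodes N" "j \<in> Tgt E i" "is_cell N E z a b" "face a b j i" for i j a b
  proof
    assume h: "cell_Lambda N act ex z a b i = z (Ga i) * z (Th j i)"
    have "EqFace i j (cell_pattern N E act z a b i) \<in> holding_eqs N E act ex z"
      unfolding holding_eqs_def using that h[symmetric] by blast
    then show False using assms(3) by simp
  qed
  show ?thesis unfolding regular_def using assms(1,2) d f by (auto simp: pos_def)
qed

lemma Zbar_I: "z \<in> pspace N E \<Longrightarrow> pos N E z \<Longrightarrow> z \<in> Zbar N E"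
  unfolding Zbar_def pindex_def pos_def by (fastforce simp: less_imp_le)

definition rawface where
  "rawface z = {EqFace i j s | i j s. i \<in> nodes N \<and> j \<in> Tgt E i \<and>
        (\<exists>a b. is_cell N E z a b \<and> face a b j i \<and> cell_pattern N E act z a b i = s \<and>
               z (Ga i) * z (Th j i) = cell_Lambda N act ex z a b i)}"

lemma HOLD0:
  assumes "pos N E z"
  shows "holding_eqs N E act ex z =
    {EqThTh i j j' | i j j'. j \<in> Tgt E i \<and> j' \<in> Tgt E i \<and> j < j' \<and> z (Th j i) = z (Th j' i)} \<union> rawface z"
proof -
  have p1: "\<And>i j. (i,j) \<in> E \<Longrightarrow> 0 < z (Lp j i)" using assms unfolding pos_def by blast
  have p2: "\<And>i j. (i,j) \<in> E \<Longrightarrow> z (Lp j i) < z (Up j i)" using assms unfolding pos_def by blast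
  have p3: "\<And>i j. (i,j) \<in> E \<Longrightarrow> 0 < z (Th j i)" using assms unfolding pos_def by blast
  have p4: "\<And>i. i \<in> nodes N \<Longrightarrow> 0 < z (Ga i)" using assms unfolding pos_def by blast
  have c1: "{EqLU i j | i j. (i, j) \<in> E \<and> z (Lp j i) = z (Up j i)} = {}"
    using p2 by force
  have c2: "{EqG i | i. i \<in> nodes N \<and> z (Ga i) = 0} = {}" using p4 by force
  have c3: "{EqTh0 i j | i j. (i, j) \<in> E \<and> z (Th j i) = 0} = {}" using p3 by force
  have c4: "{EqL0 i j | i j. (i, j) \<in> E \<and> z (Lp j i) = 0} = {}" using p1 by force
  have c5: "{EqU0 i j | i j. (i, j) \<in> E \<and> z (Up j i) = 0} = {}"
    using p1 p2 by (force dest: order.strict_trans)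
  show ?thesis unfolding holding_eqs_def c1 c2 c3 c4 c5 Un_empty_left rawface_def by (rule refl)
qed

lemma HOLD:
  assumes "pos N E z"
  shows "holding_eqs N E act ex z \<subseteq>
    {EqThTh i j j' | i j j'. j \<in> Tgt E i \<and> j' \<in> Tgt E i \<and> j < j' \<and> z (Th j i) = z (Th j' i)} \<union>
    {EqFace i j s | i j s. i \<in> nodes N \<and> j \<in> Tgt E i \<and> s \<in> Pat E i \<and> z (Ga i) * z (Th j i) = LamS ex z i s}"
proof -
  have c6: "rawface z \<subseteq>
     {EqFace i j s | i j s. i \<in> nodes N \<and> j \<in> Tgt E i \<and> s \<in> Pat E i \<and> z (Ga i) * z (Th j i) = LamS ex z i s}"
  proof
    fix e assume "e \<in> rawface z"
    then obtain i j a b where h: "e = EqFace i j (cell_pattern N E act z a b i)" "i \<in> nodes N" "j \<in> Tgt E i"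
      "z (Ga i) * z (Th j i) = cell_Lambda N act ex z a b i" unfolding rawface_def by blast
    have "z (Ga i) * z (Th j i) = LamS ex z i (cell_pattern N E act z a b i)"
      using h(4) cell_Lambda_eq[OF h(2)] by simp
    then show "e \<in> {EqFace i j s | i j s. i \<in> nodes N \<and> j \<in> Tgt E i \<and> s \<in> Pat E i \<and> z (Ga i) * z (Th j i) = LamS ex z i s}"
      using h pattern_Pat by blast
  qed
  show ?thesis unfolding HOLD0[OF assms] by (rule Un_mono[OF subset_refl c6])
qed

lemma thr_eq:
  assumes th: "\<And>j i. w (Th j i) = z (Th j i)" shows "thr w = thr z"
proof (intro ext)
  fix i t show "thr w i t = thr z i t" by (cases t) (simp_all add: thr_def th)
qed

lemma is_cell_eq:
  assumes th: "\<And>j i. w (Th j i) = z (Th j i)" shows "is_cell N E w = is_cell N E z"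
proof (intro ext)
  fix a b
  have t: "thr w = thr z" by (rule thr_eq[of w z, OF th])
  show "is_cell N E w a b = is_cell N E z a b" unfolding is_cell_def t th ..
qed

lemma box_eq:
  assumes th: "\<And>j i. w (Th j i) = z (Th j i)" shows "box N w = box N z"
proof (intro ext)
  fix a b
  have t: "thr w = thr z" by (rule thr_eq[of w z, OF th])
  show "box N w a b = box N z a b" unfolding box_def t ..
qed

lemma cell_pattern_eq:
  assumes th: "\<And>j i. w (Th j i) = z (Th j i)" shows "cell_pattern N E act w = cell_pattern N E act z"
proof (intro ext)
  fix a b i k
  have t: "box N w = box N z" by (rule box_eq[of w z, OF th])
  show "cell_pattern N E act w a b i k = cell_pattern N E act z a b i k"
    unfolding cell_pattern_def sig_upper_def t th ..
qed

lemma RP: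
  assumes reg: "regular N E act ex z" and w: "w \<in> pspace N E" "pos N E w"
    and th: "\<And>j i. w (Th j i) = z (Th j i)"
    and L: "\<And>i j s. i \<in> nodes N \<Longrightarrow> j \<in> Tgt E i \<Longrightarrow> s \<in> Pat E i \<Longrightarrow>
           LamS ex w i s = w (Ga i) * w (Th j i) \<Longrightarrow> LamS ex z i s = z (Ga i) * z (Th j i)"
  shows "regular N E act ex w"
proof (rule REG[OF w])
  have dz: "\<forall>i\<in>nodes N. \<forall>j\<in>Tgt E i. \<forall>j'\<in>Tgt E i. j \<noteq> j' \<longrightarrow> z (Th j i) \<noteq> z (Th j' i)"
    using reg unfolding regular_def by blast
  have fz: "\<forall>i\<in>nodes N. \<forall>j\<in>Tgt E i. \<forall>a b. is_cell N E z a b \<and> face a b j i \<longrightarrow>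
        cell_Lambda N act ex z a b i \<noteq> z (Ga i) * z (Th j i)"
    using reg unfolding regular_def by blast
  have A: False if "j \<in> Tgt E i" "j' \<in> Tgt E i" "j < j'" "w (Th j i) = w (Th j' i)" for i j j'
  proof -
    have "i \<in> nodes N" using Tgt_node[OF that(1)] by simp
    then show False using dz that th by force
  qed
  have B: False if "i \<in> nodes N" "j \<in> Tgt E i" "is_cell N E w a b" "face a b j i"
    "w (Ga i) * w (Th j i) = cell_Lambda N act ex w a b i" for i j a b
  proof -
    have c: "is_cell N E z a b" using that(3) is_cell_eq[of w z, OF th] by simp
    have p: "cell_pattern N E act w a b i = cell_pattern N E act z a b i"
      using cell_pattern_eq[of w z, OF th] by simp
    have "LamS ex w i (cell_pattern N E act z a b i) = w (Ga i) * w (Th j i)"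
      using that(5) cell_Lambda_eq[OF that(1), of w a b] p by simp
    then have "LamS ex z i (cell_pattern N E act z a b i) = z (Ga i) * z (Th j i)"
      using L[OF that(1,2) pattern_Pat] by blast
    then have "cell_Lambda N act ex z a b i = z (Ga i) * z (Th j i)"
      using cell_Lambda_eq[OF that(1)] by simp
    then show False using fz that(1,2,4) c by blast
  qed
  show "holding_eqs N E act ex w = {}"
  proof (rule ccontr)
    assume "holding_eqs N E act ex w \<noteq> {}"
    then obtain e where e: "e \<in> holding_eqs N E act ex w" by blast
    then consider (a) "e \<in> {EqThTh i j j' | i j j'. j \<in> Tgt E i \<and> j' \<in> Tgt E i \<and> j < j' \<and> w (Th j i) = w (Th j' i)}"
      | (b) "e \<in> rawface w" unfolding HOLD0[OF w(2)] by blast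
    then show False
    proof cases
      case a
      then obtain i j j' where "j \<in> Tgt E i" "j' \<in> Tgt E i" "j < j'" "w (Th j i) = w (Th j' i)" by blast
      then show False by (rule A)
    next
      case b
      then obtain i j a b' where "i \<in> nodes N" "j \<in> Tgt E i" "is_cell N E w a b'" "face a b' j i"
        "w (Ga i) * w (Th j i) = cell_Lambda N act ex w a b' i" unfolding rawface_def by blast
      then show False by (rule B)
    qed
  qed
qed

end


definition line :: "param \<Rightarrow> param \<Rightarrow> real \<Rightarrow> param" where
  "line z w t = (\<lambda>k. z k + t * (w k - z k))"

lemma line_0[simp]: "line z w 0 = z" and line_1[simp]: "line z w 1 = w"
  by (auto simp: line_def)

lemma line_cont: "continuous_on S (line z w)"
  unfolding line_def by (intro continuous_on_coordinatewise_then_product continuous_intros)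

context net
begin

abbreviation "Zr \<equiv> Zreg N E act ex"
abbreviation "CC z \<equiv> connected_component_set Zr z"
abbreviation "RG A B \<equiv> A \<in> GPG_vertices N E act ex \<and> B \<in> GPG_vertices N E act ex \<and> GPG_adj N E act ex A B"

lemma CC_vert: "regular N E act ex z \<Longrightarrow> CC z \<in> GPG_vertices N E act ex"
  unfolding GPG_vertices_def Zreg_def by blast

lemma path_CC:
  fixes p :: "real \<Rightarrow> param"
  assumes "continuous_on {a..b} p" "\<forall>t\<in>{a..b}. regular N E act ex (p t)" "a \<le> b"
  shows "CC (p b) = CC (p a)"
proof -
  have "connected (p ` {a..b})" by (rule connected_continuous_image[OF assms(1)]) (rule connected_Icc)
  moreover have "p ` {a..b} \<subseteq> Zr" using assms(2) by (auto simp: Zreg_def)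
  ultimately have "p ` {a..b} \<subseteq> CC (p a)"
    using assms(3) by (intro connected_component_maximal) auto
  then have "p b \<in> CC (p a)" using assms(3) by (intro subsetD[OF \<open>p ` {a..b} \<subseteq> CC (p a)\<close>]) auto
  then show ?thesis by (rule connected_component_eq)
qed

lemma SEG:
  assumes "\<forall>t\<in>{0..1}. regular N E act ex (line z w t)"
  shows "CC w = CC z"
  using path_CC[OF line_cont assms] by simp

lemma CL:
  fixes p :: "real \<Rightarrow> param"
  assumes cont: "continuous_on {0..1} p"
    and good: "\<forall>t\<in>{0..1}. p t \<in> Zbar N E \<and> (\<exists>e. holding_eqs N E act ex (p t) \<subseteq> {e})"
    and regiff: "\<forall>t\<in>{0..1}. holding_eqs N E act ex (p t) = {} \<longrightarrow> regular N E act ex (p t)"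
    and fin: "finite {t\<in>{0..1}. \<not> regular N E act ex (p t)}"
    and r0: "regular N E act ex (p 0)" and r1: "regular N E act ex (p 1)"
  shows "RG\<^sup>*\<^sup>* (CC (p 0)) (CC (p 1))"
proof -
  define Bs where "Bs = {t\<in>{0..1}. \<not> regular N E act ex (p t)}"
  have main: "\<And>a. 0 \<le> a \<Longrightarrow> a \<le> 1 \<Longrightarrow> regular N E act ex (p a) \<Longrightarrow> card (Bs \<inter> {a..1}) = n \<Longrightarrow>
     RG\<^sup>*\<^sup>* (CC (p a)) (CC (p 1))" for n
  proof (induction n)
    case 0
    have "finite (Bs \<inter> {a..1})" using fin by (simp add: Bs_def)
    then have "Bs \<inter> {a..1} = {}" using 0 by simp
    then have "\<forall>t\<in>{a..1}. regular N E act ex (p t)"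
    proof (intro ballI)
      fix t assume t: "t \<in> {a..1}" and em: "Bs \<inter> {a..1} = {}"
      show "regular N E act ex (p t)"
      proof (rule ccontr)
        assume "\<not> regular N E act ex (p t)"
        moreover have "0 \<le> t" using t 0(1) by auto
        ultimately have "t \<in> Bs \<inter> {a..1}" using t by (auto simp: Bs_def)
        then show False using em by blast
      qed
    qed
    moreover have "continuous_on {a..1} p" by (rule continuous_on_subset[OF cont]) (use 0 in auto)
    ultimately have "CC (p 1) = CC (p a)" using path_CC 0 by blast
    then show ?case by simp
  next
    case (Suc n)
    define S where "S = Bs \<inter> {a..1}"
    have finS: "finite S" using fin by (simp add: S_def Bs_def)
    have "S \<noteq> {}" using Suc.prems by (auto simp: S_def)
    define t0 where "t0 = Min S"
    have t0S: "t0 \<in> S" using finS \<open>S \<noteq> {}\<close> by (simp add: t0_def)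
    have t0min: "\<And>t. t \<in> S \<Longrightarrow> t0 \<le> t" using finS by (simp add: t0_def)
    have t0reg: "\<not> regular N E act ex (p t0)" using t0S by (simp add: S_def Bs_def)
    have t0ab: "a \<le> t0" "t0 \<le> 1" using t0S by (auto simp: S_def)
    have "t0 \<noteq> a" using t0reg Suc.prems(3) by auto
    then have at0: "a < t0" using t0ab by simp
    have "t0 \<noteq> 1" using t0reg r1 by auto
    then have t01: "t0 < 1" using t0ab by simp
    define t1 where "t1 = (if S - {t0} = {} then 1 else Min (S - {t0}))"
    have t1a: "t0 < t1"
    proof (cases "S - {t0} = {}")
      case True then show ?thesis using t01 by (simp add: t1_def)
    next
      case False
      then have "Min (S - {t0}) \<in> S - {t0}" using finS by (intro Min_in) auto
      then show ?thesis using t0min[of "Min (S - {t0})"] False by (force simp: t1_def)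
    qed
    have t1b: "t1 \<le> 1"
    proof (cases "S - {t0} = {}")
      case True then show ?thesis by (simp add: t1_def)
    next
      case False
      then have "Min (S - {t0}) \<in> S - {t0}" using finS by (intro Min_in) auto
      then have "Min (S - {t0}) \<le> 1" by (auto simp: S_def)
      then show ?thesis using False by (simp add: t1_def)
    qed
    have t1min: "\<And>t. t \<in> S - {t0} \<Longrightarrow> t1 \<le> t"
      using finS by (auto simp: t1_def)
    define t' where "t' = (t0 + t1) / 2"
    have t'1: "t0 < t'" "t' < t1" using t1a by (auto simp: t'_def)
    have regL: "\<forall>t\<in>{a..<t0}. regular N E act ex (p t)"
    proof
      fix t assume t: "t \<in> {a..<t0}"
      show "regular N E act ex (p t)"
      proof (rule ccontr)
        assume "\<not> regular N E act ex (p t)"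
        then have "t \<in> S" using t Suc.prems t01 by (auto simp: S_def Bs_def)
        then show False using t0min t by force
      qed
    qed
    have regR: "\<forall>t\<in>{t0<..t'}. regular N E act ex (p t)"
    proof
      fix t assume t: "t \<in> {t0<..t'}"
      show "regular N E act ex (p t)"
      proof (rule ccontr)
        assume "\<not> regular N E act ex (p t)"
        then have "t \<in> S - {t0}" using t Suc.prems t'1 t1b at0 by (auto simp: S_def Bs_def)
        then show False using t1min t t'1 by force
      qed
    qed
    have rt': "regular N E act ex (p t')" using regR t'1 by auto
    have contL: "continuous_on {a..t0} p" by (rule continuous_on_subset[OF cont]) (use Suc.prems t01 in auto)
    have contR: "continuous_on {t0..t'} p" by (rule continuous_on_subset[OF cont]) (use at0 Suc.prems t'1 t1b in auto)
    have L1: "p ` {a..<t0} \<subseteq> CC (p a)"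
    proof (rule connected_component_maximal)
      show "p a \<in> p ` {a..<t0}" using at0 by auto
      show "connected (p ` {a..<t0})"
        by (rule connected_continuous_image[OF continuous_on_subset[OF contL]]) auto
      show "p ` {a..<t0} \<subseteq> Zr" using regL by (auto simp: Zreg_def)
    qed
    have R1: "p ` {t0<..t'} \<subseteq> CC (p t')"
    proof (rule connected_component_maximal)
      show "p t' \<in> p ` {t0<..t'}" using t'1 by auto
      show "connected (p ` {t0<..t'})"
        by (rule connected_continuous_image[OF continuous_on_subset[OF contR]]) auto
      show "p ` {t0<..t'} \<subseteq> Zr" using regR by (auto simp: Zreg_def)
    qed
    have cl1: "p t0 \<in> closure (CC (p a))"
    proof -
      have "p ` closure {a..<t0} \<subseteq> closure (p ` {a..<t0})"
        by (rule image_closure_subset) (simp_all add: contL at0 closure_subset)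
      then have "p t0 \<in> closure (p ` {a..<t0})" using at0 by auto
      then show ?thesis using closure_mono[OF L1] by blast
    qed
    have cl2: "p t0 \<in> closure (CC (p t'))"
    proof -
      have "p ` closure {t0<..t'} \<subseteq> closure (p ` {t0<..t'})"
        by (rule image_closure_subset) (simp_all add: contR t'1 closure_subset)
      then have "p t0 \<in> closure (p ` {t0<..t'})" using t'1 by auto
      then show ?thesis using closure_mono[OF R1] by blast
    qed
    have t0i: "t0 \<in> {0..1}" using at0 t01 Suc.prems by auto
    obtain e where e: "holding_eqs N E act ex (p t0) \<subseteq> {e}" using good t0i by blast
    have "holding_eqs N E act ex (p t0) \<noteq> {}" using regiff t0i t0reg by blast
    then have "holding_eqs N E act ex (p t0) = {e}" using e by blast
    then have od: "one_deficient N E act ex (p t0)"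
      using good t0i by (auto simp: one_deficient_def)
    have adj: "RG (CC (p a)) (CC (p t'))"
      using CC_vert[OF Suc.prems(3)] CC_vert[OF rt'] od cl1 cl2 good t0i
      unfolding GPG_adj_def by blast
    have "Bs \<inter> {t'..1} = S - {t0}"
    proof
      show "Bs \<inter> {t'..1} \<subseteq> S - {t0}" using at0 t'1 by (auto simp: S_def)
      show "S - {t0} \<subseteq> Bs \<inter> {t'..1}" using t1min t'1 by (force simp: S_def)
    qed
    then have "card (Bs \<inter> {t'..1}) = n" using Suc.prems t0S finS by (simp add: S_def)
    then have "RG\<^sup>*\<^sup>* (CC (p t')) (CC (p 1))"
      using Suc.IH[of t'] at0 t'1 t1b Suc.prems rt' by auto
    then show ?case using adj by (rule converse_rtranclp_into_rtranclp[rotated])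
  qed
  show ?thesis using main[of 0 "card (Bs \<inter> {0..1})", OF _ _ r0 refl] by simp
qed

end


lemma AFF:
  fixes M :: "(real \<times> real) set"
  assumes "finite M"
  shows "\<exists>d>0. \<forall>x. 0 < x \<and> x \<le> d \<longrightarrow> (\<forall>(A, B)\<in>M. A + B * x = 0 \<longrightarrow> A = 0 \<and> B = 0)"
proof -
  define R where "R = (\<lambda>(A, B). - A / B) ` {(A, B)\<in>M. B \<noteq> 0 \<and> 0 < - A / B}"
  have "{(A, B)\<in>M. B \<noteq> 0 \<and> 0 < - A / B} \<subseteq> M" by auto
  then have finR: "finite R" unfolding R_def using assms by (intro finite_imageI) (rule finite_subset)
  define d where "d = (if R = {} then 1 else Min R / 2)"
  have Rpos: "\<And>r. r \<in> R \<Longrightarrow> 0 < r" by (auto simp: R_def)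
  have d0: "0 < d"
  proof (cases "R = {}")
    case False
    then have "Min R \<in> R" using finR by (intro Min_in) auto
    then show ?thesis using Rpos False by (simp add: d_def)
  qed (simp add: d_def)
  have dR: "\<And>r. r \<in> R \<Longrightarrow> d < r"
  proof -
    fix r assume r: "r \<in> R"
    then have "R \<noteq> {}" by auto
    have "Min R \<le> r" using finR r by simp
    moreover have "0 < Min R" using Rpos finR \<open>R \<noteq> {}\<close> by (simp add: Min_in)
    ultimately show "d < r" using \<open>R \<noteq> {}\<close> by (simp add: d_def)
  qed
  have "\<forall>x. 0 < x \<and> x \<le> d \<longrightarrow> (\<forall>(A, B)\<in>M. A + B * x = 0 \<longrightarrow> A = 0 \<and> B = 0)"
  proof (intro allI impI ballI, clarify)
    fix x A B assume x: "0 < x" "x \<le> d" and AB: "(A, B) \<in> M" and eq: "A + B * x = 0"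
    show "A = 0 \<and> B = 0"
    proof (cases "B = 0")
      case True then show ?thesis using eq by simp
    next
      case False
      then have "x = - A / B" using eq by (simp add: field_simps)
      then have "x \<in> R" using AB False x unfolding R_def by (auto intro!: image_eqI[of _ _ "(A, B)"])
      then show ?thesis using dR x by force
    qed
  qed
  then show ?thesis using d0 by blast
qed

lemma line_upd: "line z (z(k := c)) t = z(k := z k + t * (c - z k))"
  by (auto simp: line_def fun_eq_iff)

context net
begin

lemma pspace_upd: "z \<in> pspace N E \<Longrightarrow> k \<in> pindex N E \<Longrightarrow> z(k := c) \<in> pspace N E"
  by (auto simp: pspace_def)

lemma pspace_line: "z \<in> pspace N E \<Longrightarrow> w \<in> pspace N E \<Longrightarrow> line z w t \<in> pspace N E"
  by (auto simp: pspace_def line_def)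

lemma pindex_Up: "(k, i) \<in> E \<Longrightarrow> Up i k \<in> pindex N E"
  by (auto simp: pindex_def)
lemma pindex_Lp: "(k, i) \<in> E \<Longrightarrow> Lp i k \<in> pindex N E"
  by (auto simp: pindex_def)
lemma pindex_Th: "(i, j) \<in> E \<Longrightarrow> Th j i \<in> pindex N E"
  by (auto simp: pindex_def)
lemma pindex_Ga: "i \<in> nodes N \<Longrightarrow> Ga i \<in> pindex N E"
  by (auto simp: pindex_def)

lemma pos_E: "pos N E z \<Longrightarrow> (i, j) \<in> E \<Longrightarrow> 0 < z (Lp j i) \<and> z (Lp j i) < z (Up j i) \<and> 0 < z (Th j i)"
  unfolding pos_def by blast
lemma pos_G: "pos N E z \<Longrightarrow> i \<in> nodes N \<Longrightarrow> 0 < z (Ga i)"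
  unfolding pos_def by blast

lemma pos_I:
  assumes "\<And>i j. (i, j) \<in> E \<Longrightarrow> 0 < z (Lp j i) \<and> z (Lp j i) < z (Up j i) \<and> 0 < z (Th j i)"
    and "\<And>i. i \<in> nodes N \<Longrightarrow> 0 < z (Ga i)"
  shows "pos N E z"
  unfolding pos_def using assms by blast

lemma pos_Up: assumes "pos N E z" "0 \<le> x" shows "pos N E (z(Up i k := z (Up i k) + x))"
proof (rule pos_I)
  fix a b assume ab: "(a, b) \<in> E"
  show "0 < (z(Up i k := z (Up i k) + x)) (Lp b a) \<and>
        (z(Up i k := z (Up i k) + x)) (Lp b a) < (z(Up i k := z (Up i k) + x)) (Up b a) \<and>
        0 < (z(Up i k := z (Up i k) + x)) (Th b a)"
    using pos_E[OF assms(1) ab] assms(2) by (cases "b = i \<and> a = k") auto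
qed (use pos_G[OF assms(1)] in auto)

lemma pos_Ga: assumes "pos N E z" "0 \<le> x" shows "pos N E (z(Ga i := z (Ga i) + x))"
proof (rule pos_I)
  fix a b assume ab: "(a, b) \<in> E"
  show "0 < (z(Ga i := z (Ga i) + x)) (Lp b a) \<and>
        (z(Ga i := z (Ga i) + x)) (Lp b a) < (z(Ga i := z (Ga i) + x)) (Up b a) \<and>
        0 < (z(Ga i := z (Ga i) + x)) (Th b a)"
    using pos_E[OF assms(1) ab] by simp
next
  fix a assume "a \<in> nodes N"
  then show "0 < (z(Ga i := z (Ga i) + x)) (Ga a)" using pos_G[OF assms(1) \<open>a \<in> nodes N\<close>] assms(2)
    by (cases "a = i") auto
qed

lemma pos_Th: assumes "pos N E z" "0 < c" shows "pos N E (z(Th j i := c))"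
proof (rule pos_I)
  fix a b assume ab: "(a, b) \<in> E"
  show "0 < (z(Th j i := c)) (Lp b a) \<and>
        (z(Th j i := c)) (Lp b a) < (z(Th j i := c)) (Up b a) \<and>
        0 < (z(Th j i := c)) (Th b a)"
    using pos_E[OF assms(1) ab] assms(2) by (cases "b = j \<and> a = i") auto
qed (use pos_G[OF assms(1)] in auto)

lemma LamS_Th: "LamS ex (z(Th j i := c)) i' s = LamS ex z i' s"
  by (simp add: LamS_def val_def cong: if_cong)
lemma LamS_Ga: "LamS ex (z(Ga i := c)) i' s = LamS ex z i' s"
  by (simp add: LamS_def val_def cong: if_cong)
lemma LamS_Up_other: "i' \<noteq> i \<Longrightarrow> LamS ex (z(Up i k := c)) i' s = LamS ex z i' s"
  by (simp add: LamS_def val_def cong: if_cong)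

lemma LamS_Up:
  assumes i: "i \<in> nodes N"
  shows "LamS ex (z(Up i k := z (Up i k) + x)) i s =
    LamS ex z i s + x * (LamS ex (z(Up i k := z (Up i k) + 1)) i s - LamS ex z i s)"
proof (cases "s k")
  case True
  define v where "v = val z i s"
  have vc: "val (z(Up i k := c)) i s = v(k := c)" for c
    using True by (auto simp: val_def v_def fun_eq_iff)
  have vv: "v(k := z (Up i k)) = v" using True by (auto simp: val_def v_def fun_eq_iff)
  have eq: "evalM (ex i) (v(k := z (Up i k) + x)) = evalM (ex i) (v(k := z (Up i k))) +
     x * (evalM (ex i) (v(k := z (Up i k) + 1)) - evalM (ex i) (v(k := z (Up i k))))"
    by (rule evalM_affine[OF lv(2)[OF i]])
  have L1: "LamS ex (z(Up i k := c)) i s = evalM (ex i) (v(k := c))" for c by (simp only: LamS_def vc)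
  have L0: "LamS ex z i s = evalM (ex i) v" by (simp only: LamS_def v_def)
  show ?thesis unfolding L1 L0 using eq unfolding vv .
next
  case False
  have "val (z(Up i k := c)) i s = val z i s" for c
    using False by (auto simp: val_def fun_eq_iff)
  then show ?thesis by (simp add: LamS_def)
qed

lemma LamS_Up_strict:
  assumes i: "i \<in> nodes N" and s: "s \<in> Pat E i" "s k" and p: "pos N E z"
  shows "LamS ex z i s < LamS ex (z(Up i k := z (Up i k) + 1)) i s"
proof -
  define v where "v = val z i s"
  have kS: "k \<in> Src E i" using s by (auto simp: Pat_def)
  have ke: "(k, i) \<in> E" using Src_node[OF kS] by simp
  have vc: "val (z(Up i k := c)) i s = v(k := c)" for c
    using s by (auto simp: val_def v_def fun_eq_iff)
  have vv: "v(k := z (Up i k)) = v" using s by (auto simp: val_def v_def fun_eq_iff)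
  have vpos: "\<forall>k'\<in>set (lvars (ex i)). 0 < v k'"
  proof
    fix k' assume "k' \<in> set (lvars (ex i))"
    then have ke': "(k', i) \<in> E" using lv(1)[OF i] Src_node by auto
    show "0 < v k'" using pos_E[OF p ke'] by (auto simp: v_def val_def)
  qed
  have u0: "0 < z (Up i k)" using pos_E[OF p ke] by linarith
  have eq: "evalM (ex i) (v(k := z (Up i k))) < evalM (ex i) (v(k := z (Up i k) + 1))"
    by (rule evalM_strict[OF lv(2)[OF i] _ vpos u0]) (simp add: lv(1)[OF i] kS)
  have L1: "LamS ex (z(Up i k := c)) i s = evalM (ex i) (v(k := c))" for c by (simp only: LamS_def vc)
  have L0: "LamS ex z i s = evalM (ex i) v" by (simp only: LamS_def v_def)
  show ?thesis unfolding L1 L0 using eq unfolding vv .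
qed

end


context net
begin

lemma reg_pos: "regular N E act ex z \<Longrightarrow> pos N E z"
  unfolding regular_def pos_def by blast
lemma reg_ps: "regular N E act ex z \<Longrightarrow> z \<in> pspace N E"
  unfolding regular_def by blast

definition PP where "PP = {(i, s, s'). i \<in> nodes N \<and> s \<in> Pat E i \<and> s' \<in> Pat E i}"

definition Ldist where
  "Ldist w \<longleftrightarrow> (\<forall>i\<in>nodes N. \<forall>s\<in>Pat E i. \<forall>s'\<in>Pat E i. s \<noteq> s' \<longrightarrow> LamS ex w i s \<noteq> LamS ex w i s')"

definition SGi where
  "SGi w i \<longleftrightarrow> (\<forall>j\<in>Tgt E i. \<forall>s\<in>Pat E i. w (Ga i) * w (Th j i) \<noteq> LamS ex w i s)"

lemma finPP: "finite PP"
proof -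
  have "PP \<subseteq> Sigma (nodes N) (\<lambda>i. Pat E i \<times> Pat E i)" by (auto simp: PP_def)
  moreover have "finite (Sigma (nodes N) (\<lambda>i. Pat E i \<times> Pat E i))"
    by (intro finite_SigmaI) (auto simp: nodes_def fin_Pat)
  ultimately show ?thesis by (rule finite_subset)
qed

lemma key_aff:
  fixes A B x d :: real
  assumes "\<forall>x. 0 < x \<and> x \<le> d \<longrightarrow> (\<forall>(A, B)\<in>M. A + B * x = 0 \<longrightarrow> A = 0 \<and> B = 0)"
    and "(A, B) \<in> M" "0 \<le> x" "x \<le> d" "A + B * x = 0"
  shows "A = 0"
proof (cases "x = 0")
  case True then show ?thesis using assms(5) by simp
next
  case False
  then have x0: "0 < x" using assms(3) by simp
  have h: "\<forall>(A, B)\<in>M. A + B * x = 0 \<longrightarrow> A = 0 \<and> B = 0"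
    by (rule mp[OF spec[OF assms(1), of x]]) (simp add: x0 assms(4))
  show ?thesis using bspec[OF h assms(2)] assms(5) by simp
qed

definition Fok where
  "Fok w F \<longleftrightarrow> (\<forall>i' \<sigma> \<sigma>'. (i', \<sigma>, \<sigma>') \<in> F \<longrightarrow> \<sigma> \<noteq> \<sigma>' \<longrightarrow> LamS ex w i' \<sigma> \<noteq> LamS ex w i' \<sigma>')"

definition G1P where
  "G1P z F w \<longleftrightarrow> regular N E act ex w \<and> CC w = CC z \<and> (\<forall>j i. w (Th j i) = z (Th j i)) \<and>
     (\<forall>i. w (Ga i) = z (Ga i)) \<and>
     Fok w F"

lemma key_aff_B:
  fixes A B x d :: real
  assumes "\<forall>x. 0 < x \<and> x \<le> d \<longrightarrow> (\<forall>(A, B)\<in>M. A + B * x = 0 \<longrightarrow> A = 0 \<and> B = 0)"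
    and "(A, B) \<in> M" "0 < x" "x \<le> d" "A + B * x = 0"
  shows "B = 0"
proof -
  have h: "\<forall>(A, B)\<in>M. A + B * x = 0 \<longrightarrow> A = 0 \<and> B = 0"
    by (rule mp[OF spec[OF assms(1), of x]]) (simp add: assms(3,4))
  show ?thesis using bspec[OF h assms(2)] assms(5) by simp
qed

lemma G1P_parts:
  assumes "G1P z F w"
  shows "regular N E act ex w" "CC w = CC z" "\<forall>j i. w (Th j i) = z (Th j i)"
    "\<forall>i. w (Ga i) = z (Ga i)" "Fok w F"
proof -
  have h: "regular N E act ex w \<and> CC w = CC z \<and> (\<forall>j i. w (Th j i) = z (Th j i)) \<and>
    (\<forall>i. w (Ga i) = z (Ga i)) \<and> Fok w F" using assms unfolding G1P_def .
  show "regular N E act ex w" using h by (elim conjE)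
  show "CC w = CC z" using h by (elim conjE)
  show "\<forall>j i. w (Th j i) = z (Th j i)" using h by (elim conjE)
  show "\<forall>i. w (Ga i) = z (Ga i)" using h by (elim conjE)
  show "Fok w F" using h by (elim conjE)
qed

lemma G1P_intro:
  assumes "regular N E act ex w" "CC w = CC z" "\<forall>j i. w (Th j i) = z (Th j i)"
    "\<forall>i. w (Ga i) = z (Ga i)" "Fok w F"
  shows "G1P z F w"
  using assms unfolding G1P_def by (intro conjI)

lemma G1P_trans:
  assumes "G1P z F w" "G1P w F' w'" "Fok w' F''"
  shows "G1P z F'' w'"
proof (rule G1P_intro)
  show "regular N E act ex w'" by (rule G1P_parts(1)[OF assms(2)])
  show "CC w' = CC z" using G1P_parts(2)[OF assms(1)] G1P_parts(2)[OF assms(2)] by simp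
  show "\<forall>j i. w' (Th j i) = z (Th j i)" using G1P_parts(3)[OF assms(1)] G1P_parts(3)[OF assms(2)] by simp
  show "\<forall>i. w' (Ga i) = z (Ga i)" using G1P_parts(4)[OF assms(1)] G1P_parts(4)[OF assms(2)] by simp
  show "Fok w' F''" by (rule assms(3))
qed

lemma G1step0:
  assumes reg: "regular N E act ex z" and i: "i \<in> nodes N"
    and s: "s \<in> Pat E i" "s' \<in> Pat E i" "s k" "\<not> s' k"
    and F: "F \<subseteq> PP" "Fok z F"
  shows "\<exists>w. G1P z F w \<and> LamS ex w i s \<noteq> LamS ex w i s'"
proof -
  have pz: "pos N E z" by (rule reg_pos[OF reg])
  have psz: "z \<in> pspace N E" by (rule reg_ps[OF reg])
  have kS: "k \<in> Src E i" using s by (auto simp: Pat_def)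
  have ke: "(k, i) \<in> E" using Src_node[OF kS] by simp
  define u where "u = z (Up i k)"
  define wx where "wx x = z(Up i k := u + x)" for x
  define D where "D \<sigma> = LamS ex (wx 1) i \<sigma> - LamS ex z i \<sigma>" for \<sigma>
  have aff: "LamS ex (wx x) i \<sigma> = LamS ex z i \<sigma> + x * D \<sigma>" for \<sigma> x
    using LamS_Up[OF i, of z k x \<sigma>] by (simp add: wx_def D_def u_def)
  have oth: "i' \<noteq> i \<Longrightarrow> LamS ex (wx x) i' \<sigma> = LamS ex z i' \<sigma>" for i' \<sigma> x
    by (simp add: wx_def LamS_Up_other)
  have Ds: "0 < D s" using LamS_Up_strict[OF i s(1,3) pz] by (simp add: D_def wx_def u_def)
  have "val (wx 1) i s' = val z i s'" using s(4) by (auto simp: val_def wx_def fun_eq_iff)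
  then have Ds': "D s' = 0" by (simp add: D_def LamS_def)
  define M where "M = (\<lambda>(j, \<sigma>). (LamS ex z i \<sigma> - z (Ga i) * z (Th j i), D \<sigma>)) ` (Tgt E i \<times> Pat E i) \<union>
     (\<lambda>(\<sigma>, \<sigma>'). (LamS ex z i \<sigma> - LamS ex z i \<sigma>', D \<sigma> - D \<sigma>')) ` (Pat E i \<times> Pat E i)"
  have finM: "finite M" unfolding M_def by (intro finite_UnI finite_imageI finite_SigmaI fin_Tgt fin_Pat)
  obtain d where d: "0 < d" "\<forall>x. 0 < x \<and> x \<le> d \<longrightarrow> (\<forall>(A, B)\<in>M. A + B * x = 0 \<longrightarrow> A = 0 \<and> B = 0)"
    using AFF[OF finM] by blast
  have M1: "(LamS ex z i \<sigma> - z (Ga i) * z (Th j i), D \<sigma>) \<in> M" if "j \<in> Tgt E i" "\<sigma> \<in> Pat E i" for j \<sigma>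
    unfolding M_def using that by (intro UnI1 image_eqI[of _ _ "(j, \<sigma>)"]) auto
  have M2: "(LamS ex z i \<sigma> - LamS ex z i \<sigma>', D \<sigma> - D \<sigma>') \<in> M" if "\<sigma> \<in> Pat E i" "\<sigma>' \<in> Pat E i" for \<sigma> \<sigma>'
    unfolding M_def using that by (intro UnI2 image_eqI[of _ _ "(\<sigma>, \<sigma>')"]) auto
  have wxeq: "wx x = z(Up i k := z (Up i k) + x)" for x by (simp add: wx_def u_def)
  have regx: "regular N E act ex (wx x)" if x: "0 \<le> x" "x \<le> d" for x
  proof (rule RP[OF reg])
    show "wx x \<in> pspace N E" unfolding wx_def by (rule pspace_upd[OF psz pindex_Up[OF ke]])
    show "pos N E (wx x)" unfolding wxeq by (rule pos_Up[OF pz x(1)])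
    show "\<And>j i. wx x (Th j i) = z (Th j i)" by (simp add: wx_def)
    fix i' j \<sigma> assume h: "i' \<in> nodes N" "j \<in> Tgt E i'" "\<sigma> \<in> Pat E i'"
      "LamS ex (wx x) i' \<sigma> = wx x (Ga i') * wx x (Th j i')"
    show "LamS ex z i' \<sigma> = z (Ga i') * z (Th j i')"
    proof (cases "i' = i")
      case True
      then have eqx: "(LamS ex z i \<sigma> - z (Ga i) * z (Th j i)) + D \<sigma> * x = 0"
        using h aff[of x \<sigma>] by (simp add: wx_def algebra_simps)
      have hj: "j \<in> Tgt E i" "\<sigma> \<in> Pat E i" using h True by simp_all
      have "LamS ex z i \<sigma> - z (Ga i) * z (Th j i) = 0"
        by (rule key_aff[OF d(2) M1[OF hj] x eqx])
      then show ?thesis using True by simp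
    next
      case False
      then show ?thesis using h oth[OF False] by (simp add: wx_def)
    qed
  qed
  define w where "w = wx d"
  have "\<forall>t\<in>{0..1}. regular N E act ex (line z w t)"
  proof
    fix t :: real assume t: "t \<in> {0..1}"
    have "line z w t = wx (t * d)" unfolding w_def wxeq line_upd by (simp add: algebra_simps)
    moreover have "0 \<le> t * d" "t * d \<le> d" using t d(1) by (auto simp: mult_le_cancel_right1)
    ultimately show "regular N E act ex (line z w t)" using regx by simp
  qed
  then have ccw: "CC w = CC z" by (rule SEG)
  have Fw: "Fok w F" unfolding Fok_def
  proof (intro allI impI notI)
    fix i' \<sigma> \<sigma>' assume h: "(i', \<sigma>, \<sigma>') \<in> F" "\<sigma> \<noteq> \<sigma>'" "LamS ex w i' \<sigma> = LamS ex w i' \<sigma>'"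
    have hp: "\<sigma> \<in> Pat E i'" "\<sigma>' \<in> Pat E i'" using h(1) F(1) by (auto simp: PP_def)
    have hz: "LamS ex z i' \<sigma> \<noteq> LamS ex z i' \<sigma>'" using F(2) h(1,2) unfolding Fok_def by blast
    show False
    proof (cases "i' = i")
      case True
      then have "(LamS ex z i \<sigma> - LamS ex z i \<sigma>') + (D \<sigma> - D \<sigma>') * d = 0"
        using h(3) aff[of d \<sigma>] aff[of d \<sigma>'] by (simp add: w_def algebra_simps)
      then have "LamS ex z i \<sigma> - LamS ex z i \<sigma>' = 0"
        by (rule key_aff[OF d(2) M2[OF hp[unfolded True]] less_imp_le[OF d(1)] order.refl])
      then show False using hz True by simp
    next
      case False
      then show False using h(3) hz oth[OF False] by (simp add: w_def)
    qed
  qed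
  have tw: "LamS ex w i s \<noteq> LamS ex w i s'"
  proof
    assume "LamS ex w i s = LamS ex w i s'"
    then have "(LamS ex z i s - LamS ex z i s') + (D s - D s') * d = 0"
      using aff[of d s] aff[of d s'] by (simp add: w_def algebra_simps)
    then have "D s - D s' = 0" by (rule key_aff_B[OF d(2) M2[OF s(1,2)] d(1) order.refl])
    then show False using Ds Ds' by simp
  qed
  have r1: "regular N E act ex w" using regx[of d] d(1) by (simp add: w_def)
  have r2: "\<forall>j i. w (Th j i) = z (Th j i)" by (simp add: w_def wx_def)
  have r3: "\<forall>i. w (Ga i) = z (Ga i)" by (simp add: w_def wx_def)
  have "G1P z F w" by (rule G1P_intro[OF r1 ccw r2 r3 Fw])
  then show ?thesis using tw by (intro exI[of _ w] conjI)
qed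

lemma G1step:
  assumes reg: "regular N E act ex z" and i: "i \<in> nodes N"
    and s: "s \<in> Pat E i" "s' \<in> Pat E i" "s \<noteq> s'"
    and F: "F \<subseteq> PP" "Fok z F"
  shows "\<exists>w. G1P z F w \<and> LamS ex w i s \<noteq> LamS ex w i s'"
proof -
  obtain k where k: "s k \<noteq> s' k" using s(3) by (auto simp: fun_eq_iff)
  show ?thesis
  proof (cases "s k")
    case True
    have "\<not> s' k" using k True by simp
    then show ?thesis by (rule G1step0[OF reg i s(1,2) True _ F])
  next
    case False
    then have "s' k" using k by simp
    from G1step0[OF reg i s(2,1) \<open>s' k\<close> False F] obtain w where
      w1: "G1P z F w" and w2: "LamS ex w i s' \<noteq> LamS ex w i s" by (elim exE conjE)
    have "LamS ex w i s \<noteq> LamS ex w i s'" using w2 by (rule not_sym)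
    then show ?thesis using w1 by (intro exI[of _ w] conjI)
  qed
qed

lemma G1:
  assumes reg: "regular N E act ex z"
  shows "\<exists>w. regular N E act ex w \<and> CC w = CC z \<and> (\<forall>j i. w (Th j i) = z (Th j i)) \<and>
     (\<forall>i. w (Ga i) = z (Ga i)) \<and> Ldist w"
proof -
  have "\<exists>w. G1P z F w" if "finite F" "F \<subseteq> PP" for F
    using that
  proof (induction F rule: finite_induct)
    case empty
    have "G1P z {} z" by (rule G1P_intro) (simp_all add: reg Fok_def)
    then show ?case by blast
  next
    case (insert p F)
    have "F \<subseteq> PP" using insert(4) by simp
    then obtain w where w: "G1P z F w" using insert.IH by blast
    obtain i s s' where p: "p = (i, s, s')" by (cases p) auto
    have ip: "i \<in> nodes N" "s \<in> Pat E i" "s' \<in> Pat E i" using insert(4) p by (auto simp: PP_def)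
    have wr: "regular N E act ex w" "Fok w F"
      using G1P_parts[OF w] by simp_all
    show ?case
    proof (cases "s = s'")
      case True
      then have "Fok w (insert p F)" using wr(2) p unfolding Fok_def by blast
      moreover have "G1P w F w" by (rule G1P_intro) (simp_all add: wr)
      ultimately have "G1P z (insert p F) w" using G1P_trans[OF w] by blast
      then show ?thesis by blast
    next
      case False
      obtain w' where w': "G1P w F w'" "LamS ex w' i s \<noteq> LamS ex w' i s'"
        using G1step[OF wr(1) ip False _ wr(2)] insert(4) by blast
      have "Fok w' F" by (rule G1P_parts(5)[OF w'(1)])
      then have "Fok w' (insert p F)" using w'(2) p unfolding Fok_def by blast
      then have "G1P z (insert p F) w'" by (rule G1P_trans[OF w w'(1)])
      then show ?thesis by blast
    qed
  qed
  from this[OF finPP order.refl] obtain w where w: "G1P z PP w" by (elim exE)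
  have "Ldist w" unfolding Ldist_def
  proof (intro ballI impI)
    fix i s s' assume "i \<in> nodes N" "s \<in> Pat E i" "s' \<in> Pat E i" "s \<noteq> s'"
    then have "(i, s, s') \<in> PP" by (simp add: PP_def)
    moreover have "Fok w PP" by (rule G1P_parts(5)[OF w])
    ultimately show "LamS ex w i s \<noteq> LamS ex w i s'" using \<open>s \<noteq> s'\<close> unfolding Fok_def by blast
  qed
  then show ?thesis using G1P_parts[OF w] by (intro exI[of _ w] conjI)
qed

end


context net
begin

definition G2P where
  "G2P z w \<longleftrightarrow> regular N E act ex w \<and> CC w = CC z \<and> (\<forall>j i. w (Th j i) = z (Th j i)) \<and>
     (\<forall>i' s. LamS ex w i' s = LamS ex z i' s)"

lemma G2P_parts:
  assumes "G2P z w"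
  shows "regular N E act ex w" "CC w = CC z" "\<forall>j i. w (Th j i) = z (Th j i)"
    "\<forall>i' s. LamS ex w i' s = LamS ex z i' s"
proof -
  have h: "regular N E act ex w \<and> CC w = CC z \<and> (\<forall>j i. w (Th j i) = z (Th j i)) \<and>
     (\<forall>i' s. LamS ex w i' s = LamS ex z i' s)" using assms unfolding G2P_def .
  show "regular N E act ex w" using h by (elim conjE)
  show "CC w = CC z" using h by (elim conjE)
  show "\<forall>j i. w (Th j i) = z (Th j i)" using h by (elim conjE)
  show "\<forall>i' s. LamS ex w i' s = LamS ex z i' s" using h by (elim conjE)
qed

lemma G2P_intro:
  assumes "regular N E act ex w" "CC w = CC z" "\<forall>j i. w (Th j i) = z (Th j i)"
    "\<forall>i' s. LamS ex w i' s = LamS ex z i' s"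
  shows "G2P z w"
  using assms unfolding G2P_def by (intro conjI)

lemma G2P_trans:
  assumes "G2P z w" "G2P w w'"
  shows "G2P z w'"
proof (rule G2P_intro)
  show "regular N E act ex w'" by (rule G2P_parts(1)[OF assms(2)])
  show "CC w' = CC z" using G2P_parts(2)[OF assms(1)] G2P_parts(2)[OF assms(2)] by simp
  show "\<forall>j i. w' (Th j i) = z (Th j i)" using G2P_parts(3)[OF assms(1)] G2P_parts(3)[OF assms(2)] by simp
  show "\<forall>i' s. LamS ex w' i' s = LamS ex z i' s"
    using G2P_parts(4)[OF assms(1)] G2P_parts(4)[OF assms(2)] by simp
qed

lemma G2step:
  assumes reg: "regular N E act ex z" and i: "i \<in> nodes N"
  shows "\<exists>w. G2P z w \<and> (\<forall>i'. i' \<noteq> i \<longrightarrow> w (Ga i') = z (Ga i')) \<and> SGi w i"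
proof -
  have pz: "pos N E z" by (rule reg_pos[OF reg])
  have psz: "z \<in> pspace N E" by (rule reg_ps[OF reg])
  define g where "g = z (Ga i)"
  define wx where "wx x = z(Ga i := g + x)" for x
  have wxeq: "wx x = z(Ga i := z (Ga i) + x)" for x by (simp add: wx_def g_def)
  have Lx: "LamS ex (wx x) i' \<sigma> = LamS ex z i' \<sigma>" for x i' \<sigma> by (simp add: wx_def LamS_Ga)
  define M where "M = (\<lambda>(j, \<sigma>). (LamS ex z i \<sigma> - g * z (Th j i), - z (Th j i))) ` (Tgt E i \<times> Pat E i)"
  have finM: "finite M" unfolding M_def by (intro finite_imageI finite_SigmaI fin_Tgt fin_Pat)
  obtain d where d: "0 < d" "\<forall>x. 0 < x \<and> x \<le> d \<longrightarrow> (\<forall>(A, B)\<in>M. A + B * x = 0 \<longrightarrow> A = 0 \<and> B = 0)"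
    using AFF[OF finM] by blast
  have M1: "(LamS ex z i \<sigma> - g * z (Th j i), - z (Th j i)) \<in> M" if "j \<in> Tgt E i" "\<sigma> \<in> Pat E i" for j \<sigma>
    unfolding M_def using that by (intro image_eqI[of _ _ "(j, \<sigma>)"]) auto
  have regx: "regular N E act ex (wx x)" if x: "0 \<le> x" "x \<le> d" for x
  proof (rule RP[OF reg])
    show "wx x \<in> pspace N E" unfolding wx_def by (rule pspace_upd[OF psz pindex_Ga[OF i]])
    show "pos N E (wx x)" unfolding wxeq by (rule pos_Ga[OF pz x(1)])
    show "\<And>j i. wx x (Th j i) = z (Th j i)" by (simp add: wx_def)
    fix i' j \<sigma> assume h: "i' \<in> nodes N" "j \<in> Tgt E i'" "\<sigma> \<in> Pat E i'"
      "LamS ex (wx x) i' \<sigma> = wx x (Ga i') * wx x (Th j i')"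
    show "LamS ex z i' \<sigma> = z (Ga i') * z (Th j i')"
    proof (cases "i' = i")
      case True
      have h4: "LamS ex z i \<sigma> = (g + x) * z (Th j i)" using h(4)[unfolded Lx] True by (simp add: wx_def)
      have eqx: "(LamS ex z i \<sigma> - g * z (Th j i)) + (- z (Th j i)) * x = 0"
        using h4 by (simp add: algebra_simps)
      have hj: "j \<in> Tgt E i" "\<sigma> \<in> Pat E i" using h True by simp_all
      have "LamS ex z i \<sigma> - g * z (Th j i) = 0"
        by (rule key_aff[OF d(2) M1[OF hj] x eqx])
      then show ?thesis using True by (simp add: g_def)
    next
      case False
      then show ?thesis using h(4)[unfolded Lx] by (simp add: wx_def)
    qed
  qed
  define w where "w = wx d"
  have "\<forall>t\<in>{0..1}. regular N E act ex (line z w t)"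
  proof
    fix t :: real assume t: "t \<in> {0..1}"
    have "line z w t = wx (t * d)" unfolding w_def wxeq line_upd by (simp add: algebra_simps)
    moreover have "0 \<le> t * d" "t * d \<le> d" using t d(1) by (auto simp: mult_le_cancel_right1)
    ultimately show "regular N E act ex (line z w t)" using regx[of "t * d"] by simp
  qed
  then have ccw: "CC w = CC z" by (rule SEG)
  have sg: "SGi w i" unfolding SGi_def
  proof (intro ballI notI)
    fix j \<sigma> assume j: "j \<in> Tgt E i" and \<sigma>: "\<sigma> \<in> Pat E i"
      and h: "w (Ga i) * w (Th j i) = LamS ex w i \<sigma>"
    have h4: "LamS ex z i \<sigma> = (g + d) * z (Th j i)" using h[unfolded w_def, unfolded Lx] by (simp add: wx_def)
    have eqx: "(LamS ex z i \<sigma> - g * z (Th j i)) + (- z (Th j i)) * d = 0"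
      using h4 by (simp add: algebra_simps)
    have "- z (Th j i) = 0" by (rule key_aff_B[OF d(2) M1[OF j \<sigma>] d(1) order.refl eqx])
    moreover have "0 < z (Th j i)" using pos_E[OF pz] Tgt_node[OF j] by blast
    ultimately show False by simp
  qed
  have r1: "regular N E act ex w" using regx[of d] d(1) by (simp add: w_def)
  have r3: "\<forall>j i. w (Th j i) = z (Th j i)" by (simp add: w_def wx_def)
  have r4: "\<forall>i' s. LamS ex w i' s = LamS ex z i' s" by (simp add: w_def Lx)
  have "G2P z w" by (rule G2P_intro[OF r1 ccw r3 r4])
  moreover have "\<forall>i'. i' \<noteq> i \<longrightarrow> w (Ga i') = z (Ga i')" by (simp add: w_def wx_def)
  ultimately show ?thesis using sg by (intro exI[of _ w] conjI)
qed

lemma SGi_cong: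
  assumes "w' (Ga i) = w (Ga i)" "\<forall>j i. w' (Th j i) = w (Th j i)" "\<forall>i' s. LamS ex w' i' s = LamS ex w i' s"
  shows "SGi w' i = SGi w i"
  unfolding SGi_def using assms by simp

lemma Ldist_cong:
  assumes "\<forall>i' s. LamS ex w' i' s = LamS ex w i' s"
  shows "Ldist w' = Ldist w"
  unfolding Ldist_def using assms by simp

lemma GEN:
  assumes reg: "regular N E act ex z"
  shows "\<exists>w. regular N E act ex w \<and> CC w = CC z \<and> Ldist w \<and> (\<forall>i\<in>nodes N. SGi w i)"
proof -
  obtain w1 where w1: "regular N E act ex w1" "CC w1 = CC z" "Ldist w1"
    using G1[OF reg] by blast
  have gen2: "\<exists>w. G2P w1 w \<and> (\<forall>i\<in>F. SGi w i)" if "finite F" "F \<subseteq> nodes N" for F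
    using that
  proof (induction F rule: finite_induct)
    case empty
    have "G2P w1 w1" by (rule G2P_intro) (simp_all add: w1(1))
    then show ?case by blast
  next
    case (insert i F)
    have "F \<subseteq> nodes N" using insert(4) by simp
    then obtain w where w: "G2P w1 w" "\<forall>i\<in>F. SGi w i" using insert.IH by blast
    have i: "i \<in> nodes N" using insert(4) by simp
    obtain w' where w': "G2P w w'" "\<forall>i'. i' \<noteq> i \<longrightarrow> w' (Ga i') = w (Ga i')" "SGi w' i"
      using G2step[OF G2P_parts(1)[OF w(1)] i] by blast
    have "\<forall>i'\<in>F. SGi w' i'"
    proof
      fix i' assume i': "i' \<in> F"
      then have "i' \<noteq> i" using insert(2) by auto
      then have "SGi w' i' = SGi w i'"
        by (intro SGi_cong) (use w'(2) G2P_parts(3,4)[OF w'(1)] in simp_all)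
      then show "SGi w' i'" using w(2) i' by simp
    qed
    then have "\<forall>i'\<in>insert i F. SGi w' i'" using w'(3) by simp
    moreover have "G2P w1 w'" by (rule G2P_trans[OF w(1) w'(1)])
    ultimately show ?case by blast
  qed
  have fn: "finite (nodes N)" by (simp add: nodes_def)
  obtain w where w: "G2P w1 w" "\<forall>i\<in>nodes N. SGi w i"
    using gen2[OF fn order.refl] by blast
  have "Ldist w" using Ldist_cong[OF G2P_parts(4)[OF w(1)]] w1(3) by simp
  moreover have "CC w = CC z" using G2P_parts(2)[OF w(1)] w1(2) by simp
  ultimately show ?thesis using G2P_parts(1)[OF w(1)] w(2) by (intro exI[of _ w] conjI)
qed

end


context net
begin

lemma reg_dist:
  assumes "regular N E act ex y" "i \<in> nodes N" "j1 \<in> Tgt E i" "j2 \<in> Tgt E i" "j1 \<noteq> j2"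
  shows "y (Th j1 i) \<noteq> y (Th j2 i)"
proof -
  have "\<forall>i\<in>nodes N. \<forall>j\<in>Tgt E i. \<forall>j'\<in>Tgt E i. j \<noteq> j' \<longrightarrow> y (Th j i) \<noteq> y (Th j' i)"
    using assms(1) unfolding regular_def by (elim conjE)
  then show ?thesis using assms(2-5) by blast
qed

lemma RSTEP:
  assumes reg: "regular N E act ex y" and Ld: "Ldist y" and SG: "\<forall>i'\<in>nodes N. SGi y i'"
    and ij: "(i, j) \<in> E" and ab: "y (Th j i) < b"
    and hb1: "\<forall>\<sigma>\<in>Pat E i. y (Ga i) * b \<noteq> LamS ex y i \<sigma>"
    and hb2: "\<forall>j''\<in>Tgt E i. j'' \<noteq> j \<longrightarrow> y (Th j'' i) \<noteq> b"
  shows "regular N E act ex (y(Th j i := b)) \<and> (\<forall>i'\<in>nodes N. SGi (y(Th j i := b)) i') \<and>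
     RG\<^sup>*\<^sup>* (CC y) (CC (y(Th j i := b)))"
proof -
  have i: "i \<in> nodes N" and jT: "j \<in> Tgt E i" using E_sub ij by (auto simp: Tgt_def)
  have py: "pos N E y" by (rule reg_pos[OF reg])
  have psy: "y \<in> pspace N E" by (rule reg_ps[OF reg])
  define a where "a = y (Th j i)"
  have a0: "0 < a" using pos_E[OF py ij] by (simp add: a_def)
  have ab': "a < b" using ab by (simp add: a_def)
  define g where "g = y (Ga i)"
  have g0: "0 < g" using pos_G[OF py i] by (simp add: g_def)
  define q where "q c = y(Th j i := c)" for c
  define S1 where "S1 c = {\<sigma>\<in>Pat E i. g * c = LamS ex y i \<sigma>}" for c
  define S2 where "S2 c = {j''\<in>Tgt E i. j'' \<noteq> j \<and> y (Th j'' i) = c}" for c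
  have Lq: "LamS ex (q c) i' \<sigma> = LamS ex y i' \<sigma>" for c i' \<sigma> by (simp add: q_def LamS_Th)
  have posq: "pos N E (q c)" if "0 < c" for c unfolding q_def by (rule pos_Th[OF py that])
  have psq: "q c \<in> pspace N E" for c unfolding q_def by (rule pspace_upd[OF psy pindex_Th[OF ij]])
  have H1: "holding_eqs N E act ex (q c) \<subseteq> (EqFace i j) ` S1 c \<union> (\<lambda>j''. EqThTh i (min j j'') (max j j'')) ` S2 c"
    if c0: "0 < c" for c
  proof
    fix e assume e: "e \<in> holding_eqs N E act ex (q c)"
    have "e \<in> {EqThTh i j j' | i j j'. j \<in> Tgt E i \<and> j' \<in> Tgt E i \<and> j < j' \<and> q c (Th j i) = q c (Th j' i)} \<union>
      {EqFace i j s | i j s. i \<in> nodes N \<and> j \<in> Tgt E i \<and> s \<in> Pat E i \<and> q c (Ga i) * q c (Th j i) = LamS ex (q c) i s}"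
      using HOLD[OF posq[OF c0]] e by (rule subsetD)
    then consider (T) i' j1 j2 where "e = EqThTh i' j1 j2" "j1 \<in> Tgt E i'" "j2 \<in> Tgt E i'" "j1 < j2"
        "q c (Th j1 i') = q c (Th j2 i')"
      | (Fc) i' j' s where "e = EqFace i' j' s" "i' \<in> nodes N" "j' \<in> Tgt E i'" "s \<in> Pat E i'"
        "q c (Ga i') * q c (Th j' i') = LamS ex (q c) i' s"
      by blast
    then show "e \<in> (EqFace i j) ` S1 c \<union> (\<lambda>j''. EqThTh i (min j j'') (max j j'')) ` S2 c"
    proof cases
      case T
      have i'n: "i' \<in> nodes N" using Tgt_node[OF T(2)] by simp
      show ?thesis
      proof (cases "i' = i \<and> (j1 = j \<or> j2 = j)")
        case True
        then have ii: "i' = i" by simp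
        show ?thesis
        proof (cases "j1 = j")
          case True
          then have "j2 \<noteq> j" using T(4) by simp
          then have "j2 \<in> S2 c" using T(3,5) ii True by (simp add: S2_def q_def)
          moreover have "e = EqThTh i (min j j2) (max j j2)" using T(1,4) ii True by simp
          ultimately show ?thesis by blast
        next
          case False
          then have j2j: "j2 = j" using \<open>i' = i \<and> (j1 = j \<or> j2 = j)\<close> by simp
          then have "j1 \<in> S2 c" using T(2,4,5) ii False by (simp add: S2_def q_def)
          moreover have "e = EqThTh i (min j j1) (max j j1)" using T(1,4) ii j2j by simp
          ultimately show ?thesis by blast
        qed
      next
        case False
        then have "y (Th j1 i') = y (Th j2 i')" using T(5) by (auto simp: q_def)
        moreover have "y (Th j1 i') \<noteq> y (Th j2 i')" using reg_dist[OF reg i'n T(2,3)] T(4) by simp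
        ultimately show ?thesis by simp
      qed
    next
      case Fc
      have eq: "q c (Ga i') * q c (Th j' i') = LamS ex y i' s" using Fc(5) by (simp add: Lq)
      show ?thesis
      proof (cases "i' = i \<and> j' = j")
        case True
        then have "s \<in> S1 c" using eq Fc(4) by (simp add: S1_def q_def g_def)
        then show ?thesis using Fc(1) True by blast
      next
        case False
        then have "y (Ga i') * y (Th j' i') = LamS ex y i' s" using eq by (auto simp: q_def)
        moreover have "SGi y i'" using SG Fc(2) by blast
        ultimately show ?thesis using Fc(3,4) unfolding SGi_def by blast
      qed
    qed
  qed
  have H2: "S2 c = {}" if "\<sigma> \<in> S1 c" for \<sigma> c
  proof (rule ccontr)
    assume "S2 c \<noteq> {}"
    then obtain j'' where j'': "j'' \<in> S2 c" by blast
    have "g * y (Th j'' i) = LamS ex y i \<sigma>" using that j'' by (simp add: S1_def S2_def)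
    moreover have "SGi y i" using SG i by blast
    ultimately show False using that j'' unfolding SGi_def S1_def S2_def g_def by blast
  qed
  have H3: "\<sigma>1 = \<sigma>2" if "\<sigma>1 \<in> S1 c" "\<sigma>2 \<in> S1 c" for \<sigma>1 \<sigma>2 c
  proof (rule ccontr)
    assume "\<sigma>1 \<noteq> \<sigma>2"
    then have "LamS ex y i \<sigma>1 \<noteq> LamS ex y i \<sigma>2" using Ld i that unfolding Ldist_def S1_def by blast
    then show False using that unfolding S1_def by simp
  qed
  have H4: "j1 = j2" if "j1 \<in> S2 c" "j2 \<in> S2 c" for j1 j2 c
  proof (rule ccontr)
    assume "j1 \<noteq> j2"
    have t: "j1 \<in> Tgt E i" "j2 \<in> Tgt E i" "y (Th j1 i) = c" "y (Th j2 i) = c"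
      using that by (simp_all add: S2_def)
    show False using reg_dist[OF reg i t(1,2) \<open>j1 \<noteq> j2\<close>] t(3,4) by simp
  qed
  have good: "\<exists>e. holding_eqs N E act ex (q c) \<subseteq> {e}" if c0: "0 < c" for c
  proof (cases "S1 c = {}")
    case False
    then obtain \<sigma> where \<sigma>: "\<sigma> \<in> S1 c" by blast
    have "S2 c = {}" by (rule H2[OF \<sigma>])
    moreover have "S1 c = {\<sigma>}" using H3 \<sigma> by blast
    ultimately have "holding_eqs N E act ex (q c) \<subseteq> {EqFace i j \<sigma>}" using H1[OF c0] by simp
    then show ?thesis by blast
  next
    case True
    show ?thesis
    proof (cases "S2 c = {}")
      case True
      then have "holding_eqs N E act ex (q c) \<subseteq> {}" using H1[OF c0] \<open>S1 c = {}\<close> by simp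
      then show ?thesis by blast
    next
      case False
      then obtain j'' where j'': "j'' \<in> S2 c" by blast
      then have "S2 c = {j''}" using H4 by blast
      then have "holding_eqs N E act ex (q c) \<subseteq> {EqThTh i (min j j'') (max j j'')}"
        using H1[OF c0] \<open>S1 c = {}\<close> by simp
      then show ?thesis by blast
    qed
  qed
  have regc: "regular N E act ex (q c)" if c0: "0 < c" and "S1 c = {}" "S2 c = {}" for c
  proof (rule REG[OF psq posq[OF c0]])
    show "holding_eqs N E act ex (q c) = {}" using H1[OF c0] that(2,3) by simp
  qed
  define p where "p t = line y (q b) t" for t
  have pt: "p t = q (a + t * (b - a))" for t unfolding p_def q_def line_upd a_def by simp
  have cpos: "0 < a + t * (b - a)" if "t \<in> {0..1}" for t
  proof -
    have "0 \<le> t * (b - a)" using that ab' by simp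
    then show ?thesis using a0 by linarith
  qed
  have s1b: "S1 b = {}" using hb1 by (auto simp: S1_def g_def)
  have s2b: "S2 b = {}" using hb2 by (auto simp: S2_def)
  have rb: "regular N E act ex (q b)" by (rule regc[OF _ s1b s2b]) (use a0 ab' in simp)
  have CLr: "RG\<^sup>*\<^sup>* (CC (p 0)) (CC (p 1))"
  proof (rule CL)
    show "continuous_on {0..1} p" unfolding p_def by (rule line_cont)
    show "\<forall>t\<in>{0..1}. p t \<in> Zbar N E \<and> (\<exists>e. holding_eqs N E act ex (p t) \<subseteq> {e})"
    proof
      fix t :: real assume t: "t \<in> {0..1}"
      show "p t \<in> Zbar N E \<and> (\<exists>e. holding_eqs N E act ex (p t) \<subseteq> {e})"
        unfolding pt using Zbar_I[OF psq posq[OF cpos[OF t]]] good[OF cpos[OF t]] by blast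
    qed
    show "\<forall>t\<in>{0..1}. holding_eqs N E act ex (p t) = {} \<longrightarrow> regular N E act ex (p t)"
    proof (intro ballI impI)
      fix t :: real assume t: "t \<in> {0..1}" and h: "holding_eqs N E act ex (p t) = {}"
      show "regular N E act ex (p t)" unfolding pt
        by (rule REG[OF psq posq[OF cpos[OF t]]]) (use h pt in simp)
    qed
    have sub: "{t\<in>{0..1}. \<not> regular N E act ex (p t)} \<subseteq>
      (\<lambda>\<sigma>. (LamS ex y i \<sigma> / g - a) / (b - a)) ` Pat E i \<union> (\<lambda>j''. (y (Th j'' i) - a) / (b - a)) ` Tgt E i"
    proof
      fix t assume "t \<in> {t\<in>{0..1}. \<not> regular N E act ex (p t)}"
      then have t: "t \<in> {0..1}" and nr: "\<not> regular N E act ex (q (a + t * (b - a)))" by (auto simp: pt)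
      have ba: "b - a \<noteq> 0" using ab' by simp
      show "t \<in> (\<lambda>\<sigma>. (LamS ex y i \<sigma> / g - a) / (b - a)) ` Pat E i \<union> (\<lambda>j''. (y (Th j'' i) - a) / (b - a)) ` Tgt E i"
      proof (cases "S1 (a + t * (b - a)) = {}")
        case False
        then obtain \<sigma> where \<sigma>: "\<sigma> \<in> Pat E i" "g * (a + t * (b - a)) = LamS ex y i \<sigma>"
          by (auto simp: S1_def)
        have "t = (LamS ex y i \<sigma> / g - a) / (b - a)"
          using \<sigma>(2) g0 ba by (simp add: field_simps)
        then show ?thesis using \<sigma>(1) by blast
      next
        case True
        then have "S2 (a + t * (b - a)) \<noteq> {}" using regc[OF cpos[OF t]] nr by blast
        then obtain j'' where j'': "j'' \<in> Tgt E i" "y (Th j'' i) = a + t * (b - a)"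
          by (auto simp: S2_def)
        have "t = (y (Th j'' i) - a) / (b - a)"
          using j''(2) ba by (simp add: field_simps)
        then show ?thesis using j''(1) by blast
      qed
    qed
    show "finite {t\<in>{0..1}. \<not> regular N E act ex (p t)}"
      by (rule finite_subset[OF sub]) (intro finite_UnI finite_imageI fin_Pat fin_Tgt)
    show "regular N E act ex (p 0)" using reg by (simp add: p_def)
    show "regular N E act ex (p 1)" using rb by (simp add: p_def)
  qed
  have sgb: "\<forall>i'\<in>nodes N. SGi (q b) i'"
  proof (intro ballI)
    fix i' assume i': "i' \<in> nodes N"
    show "SGi (q b) i'" unfolding SGi_def
    proof (intro ballI notI)
      fix j' \<sigma> assume j': "j' \<in> Tgt E i'" and \<sigma>: "\<sigma> \<in> Pat E i'"
        and h: "q b (Ga i') * q b (Th j' i') = LamS ex (q b) i' \<sigma>"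
      have h': "q b (Ga i') * q b (Th j' i') = LamS ex y i' \<sigma>" using h by (simp add: Lq)
      show False
      proof (cases "i' = i \<and> j' = j")
        case True
        then have "y (Ga i) * b = LamS ex y i \<sigma>" using h' by (simp add: q_def)
        then show False using hb1 \<sigma> True by blast
      next
        case False
        then have "y (Ga i') * y (Th j' i') = LamS ex y i' \<sigma>" using h' by (auto simp: q_def)
        moreover have "SGi y i'" using SG i' by blast
        ultimately show False using j' \<sigma> unfolding SGi_def by blast
      qed
    qed
  qed
  show ?thesis using rb sgb CLr by (simp add: p_def q_def)
qed

end


definition thK :: "real \<Rightarrow> param \<Rightarrow> (nat \<times> nat) set \<Rightarrow> param" where
  "thK K z F = (\<lambda>idx. case idx of Th j i \<Rightarrow> (if (i, j) \<in> F then K * (real j + 1) else z (Th j i)) | _ \<Rightarrow> z idx)"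

lemma thK_simps[simp]:
  "thK K z F (Th j i) = (if (i, j) \<in> F then K * (real j + 1) else z (Th j i))"
  "thK K z F (Lp j i) = z (Lp j i)" "thK K z F (Up j i) = z (Up j i)" "thK K z F (Ga i) = z (Ga i)"
  by (simp_all add: thK_def)

lemma thK_empty: "thK K z {} = z"
proof
  fix x show "thK K z {} x = z x" by (cases x) simp_all
qed

lemma thK_insert: "thK K z (insert (i, j) F) = (thK K z F)(Th j i := K * (real j + 1))"
proof
  fix x show "thK K z (insert (i, j) F) x = ((thK K z F)(Th j i := K * (real j + 1))) x"
    by (cases x) auto
qed

lemma LamS_thK: "LamS ex (thK K z F) i s = LamS ex z i s"
proof -
  have "val (thK K z F) i s = val z i s" by (simp add: val_def fun_eq_iff)
  then show ?thesis by (simp add: LamS_def)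
qed

lemma conv_form: "A + t * (B - A) = (1 - t) * A + t * (B::real)"
  by (simp add: algebra_simps)

lemma conv_le_max:
  fixes A B t :: real
  assumes "0 \<le> t" "t \<le> 1"
  shows "A + t * (B - A) \<le> max A B"
proof -
  have "(1 - t) * A \<le> (1 - t) * max A B" by (rule mult_left_mono) (use assms in auto)
  moreover have "t * B \<le> t * max A B" by (rule mult_left_mono) (use assms in auto)
  ultimately have "(1 - t) * A + t * B \<le> (1 - t) * max A B + t * max A B" by linarith
  also have "\<dots> = max A B" by (simp add: algebra_simps)
  finally show ?thesis unfolding conv_form .
qed

lemma conv_ge_min:
  fixes A B t :: real
  assumes "0 \<le> t" "t \<le> 1"
  shows "min A B \<le> A + t * (B - A)"
proof -
  have "(1 - t) * min A B \<le> (1 - t) * A" by (rule mult_left_mono) (use assms in auto)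
  moreover have "t * min A B \<le> t * B" by (rule mult_left_mono) (use assms in auto)
  ultimately have "(1 - t) * min A B + t * min A B \<le> (1 - t) * A + t * B" by linarith
  moreover have "(1 - t) * min A B + t * min A B = min A B" by (simp add: algebra_simps)
  ultimately show ?thesis unfolding conv_form by linarith
qed

lemma conv_pos:
  fixes A B t :: real
  assumes "0 < A" "0 < B" "0 \<le> t" "t \<le> 1"
  shows "0 < A + t * (B - A)"
  using conv_ge_min[OF assms(3,4), of A B] assms(1,2) by linarith

context net
begin

lemma pos_line:
  assumes p1: "pos N E z1" and p2: "pos N E z2" and t: "0 \<le> t" "t \<le> 1"
  shows "pos N E (line z1 z2 t)"
proof (rule pos_I)
  fix i j assume ij: "(i, j) \<in> E"
  note h1 = pos_E[OF p1 ij] and h2 = pos_E[OF p2 ij]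
  have a: "0 < line z1 z2 t (Lp j i)" unfolding line_def by (rule conv_pos) (use h1 h2 t in auto)
  have c: "0 < line z1 z2 t (Th j i)" unfolding line_def by (rule conv_pos) (use h1 h2 t in auto)
  have "0 < (z1 (Up j i) - z1 (Lp j i)) + t * ((z2 (Up j i) - z2 (Lp j i)) - (z1 (Up j i) - z1 (Lp j i)))"
    by (rule conv_pos) (use h1 h2 t in auto)
  then have b: "line z1 z2 t (Lp j i) < line z1 z2 t (Up j i)"
    unfolding line_def by (simp add: algebra_simps)
  show "0 < line z1 z2 t (Lp j i) \<and> line z1 z2 t (Lp j i) < line z1 z2 t (Up j i) \<and> 0 < line z1 z2 t (Th j i)"
    using a b c by simp
next
  fix i assume i: "i \<in> nodes N"
  show "0 < line z1 z2 t (Ga i)" unfolding line_def by (rule conv_pos) (use pos_G[OF p1 i] pos_G[OF p2 i] t in auto)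
qed

lemma LamS_le:
  assumes i: "i \<in> nodes N"
    and h: "\<And>k. k \<in> Src E i \<Longrightarrow> 0 \<le> w (Lp i k) \<and> w (Lp i k) \<le> w (Up i k) \<and> w (Up i k) \<le> M k"
  shows "LamS ex w i s \<le> evalM (ex i) M"
  unfolding LamS_def
proof (rule evalM_mono, intro ballI)
  fix k assume "k \<in> set (lvars (ex i))"
  then have k: "k \<in> Src E i" using lv(1)[OF i] by simp
  show "0 \<le> val w i s k \<and> val w i s k \<le> M k" using h[OF k] by (auto simp: val_def)
qed

lemma MID:
  assumes r1: "regular N E act ex z1" and r2: "regular N E act ex z2"
    and th: "\<forall>j i. z2 (Th j i) = z1 (Th j i)"
    and KB: "\<forall>t\<in>{0..1}. \<forall>i\<in>nodes N. \<forall>j\<in>Tgt E i. \<forall>\<sigma>\<in>Pat E i.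
      LamS ex (line z1 z2 t) i \<sigma> < line z1 z2 t (Ga i) * z1 (Th j i)"
  shows "CC z2 = CC z1"
proof (rule SEG, intro ballI)
  fix t :: real assume t: "t \<in> {0..1}"
  define q where "q = line z1 z2 t"
  have lt: "q (Th j i) = z1 (Th j i)" for j i by (simp add: q_def line_def th)
  have pq: "pos N E q" unfolding q_def by (rule pos_line[OF reg_pos[OF r1] reg_pos[OF r2]]) (use t in auto)
  have psq: "q \<in> pspace N E" unfolding q_def by (rule pspace_line[OF reg_ps[OF r1] reg_ps[OF r2]])
  have "holding_eqs N E act ex q = {}"
  proof (rule ccontr)
    assume "holding_eqs N E act ex q \<noteq> {}"
    then obtain e where e: "e \<in> holding_eqs N E act ex q" by blast
    have "e \<in> {EqThTh i j j' | i j j'. j \<in> Tgt E i \<and> j' \<in> Tgt E i \<and> j < j' \<and> q (Th j i) = q (Th j' i)} \<union>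
      {EqFace i j s | i j s. i \<in> nodes N \<and> j \<in> Tgt E i \<and> s \<in> Pat E i \<and> q (Ga i) * q (Th j i) = LamS ex q i s}"
      using HOLD[OF pq] e by (rule subsetD)
    then consider (T) i j1 j2 where "j1 \<in> Tgt E i" "j2 \<in> Tgt E i" "j1 < j2" "q (Th j1 i) = q (Th j2 i)"
      | (Fc) i j s where "i \<in> nodes N" "j \<in> Tgt E i" "s \<in> Pat E i" "q (Ga i) * q (Th j i) = LamS ex q i s"
      by blast
    then show False
    proof cases
      case T
      have "i \<in> nodes N" using Tgt_node[OF T(1)] by simp
      then show False using reg_dist[OF r1 _ T(1,2)] T(3,4) lt by simp
    next
      case Fc
      have "LamS ex q i s < q (Ga i) * z1 (Th j i)" using KB t Fc(1-3) unfolding q_def by blast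
      then show False using Fc(4) lt by simp
    qed
  qed
  then show "regular N E act ex (line z1 z2 t)" using REG[OF psq pq] by (simp add: q_def)
qed

lemma RAISE:
  assumes reg: "regular N E act ex z" and Ld: "Ldist z" and SG: "\<forall>i\<in>nodes N. SGi z i"
    and K: "0 < K" and Kth: "\<forall>(i, j)\<in>E. z (Th j i) < K"
    and KL: "\<forall>i\<in>nodes N. \<forall>\<sigma>\<in>Pat E i. LamS ex z i \<sigma> < z (Ga i) * K"
  shows "regular N E act ex (thK K z E) \<and> RG\<^sup>*\<^sup>* (CC z) (CC (thK K z E))"
proof -
  have KK: "K \<le> K * (real j + 1)" for j using K by (simp add: algebra_simps)
  have main: "regular N E act ex (thK K z F) \<and> (\<forall>i\<in>nodes N. SGi (thK K z F) i) \<and>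
    RG\<^sup>*\<^sup>* (CC z) (CC (thK K z F))" if "finite F" "F \<subseteq> E" for F
    using that
  proof (induction F rule: finite_induct)
    case empty
    show ?case using reg SG by (simp add: thK_empty)
  next
    case (insert p F)
    obtain i j where p: "p = (i, j)" by (cases p)
    have ij: "(i, j) \<in> E" and ijF: "(i, j) \<notin> F" using insert(2,4) p by auto
    define y where "y = thK K z F"
    have IH: "regular N E act ex y" "\<forall>i\<in>nodes N. SGi y i" "RG\<^sup>*\<^sup>* (CC z) (CC y)"
      using insert.IH insert(4) by (simp_all add: y_def)
    have Lyz: "LamS ex y i' s = LamS ex z i' s" for i' s by (simp add: y_def LamS_thK)
    have Ldy: "Ldist y" using Ld Ldist_cong[of y z] Lyz by simp
    have i: "i \<in> nodes N" using E_sub ij by auto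
    have ab: "y (Th j i) < K * (real j + 1)"
      using Kth ij ijF KK[of j] by (force simp: y_def)
    have g0: "0 < z (Ga i)" using pos_G[OF reg_pos[OF reg] i] .
    have hb1: "\<forall>\<sigma>\<in>Pat E i. y (Ga i) * (K * (real j + 1)) \<noteq> LamS ex y i \<sigma>"
    proof
      fix \<sigma> assume \<sigma>: "\<sigma> \<in> Pat E i"
      have "LamS ex z i \<sigma> < z (Ga i) * K" using KL i \<sigma> by blast
      also have "\<dots> \<le> z (Ga i) * (K * (real j + 1))" by (rule mult_left_mono[OF KK]) (use g0 in simp)
      finally show "y (Ga i) * (K * (real j + 1)) \<noteq> LamS ex y i \<sigma>" by (simp add: y_def LamS_thK)
    qed
    have hb2: "\<forall>j''\<in>Tgt E i. j'' \<noteq> j \<longrightarrow> y (Th j'' i) \<noteq> K * (real j + 1)"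
    proof (intro ballI impI)
      fix j'' assume j'': "j'' \<in> Tgt E i" "j'' \<noteq> j"
      have ij'': "(i, j'') \<in> E" using j'' by (simp add: Tgt_def)
      show "y (Th j'' i) \<noteq> K * (real j + 1)"
      proof (cases "(i, j'') \<in> F")
        case True
        then have "y (Th j'' i) = K * (real j'' + 1)" by (simp add: y_def)
        then show ?thesis using K j''(2) by simp
      next
        case False
        then have "y (Th j'' i) = z (Th j'' i)" by (simp add: y_def)
        moreover have "z (Th j'' i) < K" using Kth ij'' by blast
        ultimately show ?thesis using KK[of j] by simp
      qed
    qed
    have st: "regular N E act ex (y(Th j i := K * (real j + 1))) \<and>
      (\<forall>i'\<in>nodes N. SGi (y(Th j i := K * (real j + 1))) i') \<and>
      RG\<^sup>*\<^sup>* (CC y) (CC (y(Th j i := K * (real j + 1))))"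
      by (rule RSTEP[OF IH(1) Ldy IH(2) ij ab hb1 hb2])
    have yeq: "y(Th j i := K * (real j + 1)) = thK K z (insert p F)"
      by (simp add: y_def p thK_insert)
    show ?case using st IH(3) unfolding yeq by (auto intro: rtranclp_trans)
  qed
  show ?thesis using main[OF finE order.refl] by blast
qed

end


context net
begin

lemma RG_sym: "RG A B \<Longrightarrow> RG B A"
  unfolding GPG_adj_def by blast

lemma RG_rsym: "RG\<^sup>*\<^sup>* A B \<Longrightarrow> RG\<^sup>*\<^sup>* B A"
proof (induction rule: rtranclp_induct)
  case base
  then show ?case by simp
next
  case (step b c)
  show ?case by (rule converse_rtranclp_into_rtranclp[OF RG_sym[OF step(2)] step(3)])
qed

lemma EXIST: "\<exists>z. regular N E act ex z"
proof -
  define K0 where "K0 = 1 + (\<Sum>i\<in>nodes N. evalM (ex i) (\<lambda>_. 2))"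
  have fn: "finite (nodes N)" by (simp add: nodes_def)
  have nn: "0 \<le> evalM (ex i) (\<lambda>_. 2)" for i by (rule evalM_nonneg) simp
  have K0b: "evalM (ex i) (\<lambda>_. 2) < K0" if "i \<in> nodes N" for i
  proof -
    have "evalM (ex i) (\<lambda>_. 2) \<le> (\<Sum>i\<in>nodes N. evalM (ex i) (\<lambda>_. 2))"
      by (rule member_le_sum[OF that _ fn]) (rule nn)
    then show ?thesis by (simp add: K0_def)
  qed
  have K0p: "0 < K0"
  proof -
    have "0 \<le> (\<Sum>i\<in>nodes N. evalM (ex i) (\<lambda>_. 2))" by (rule sum_nonneg) (rule nn)
    then show ?thesis by (simp add: K0_def)
  qed
  define z0 :: param where "z0 = (\<lambda>idx. case idx of
      Lp j i \<Rightarrow> (if (i, j) \<in> E then 1 else 0)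
    | Up j i \<Rightarrow> (if (i, j) \<in> E then 2 else 0)
    | Th j i \<Rightarrow> (if (i, j) \<in> E then K0 * (real j + 1) else 0)
    | Ga i \<Rightarrow> (if i \<in> nodes N then 1 else 0))"
  have zs[simp]: "z0 (Lp j i) = (if (i, j) \<in> E then 1 else 0)"
    "z0 (Up j i) = (if (i, j) \<in> E then 2 else 0)"
    "z0 (Th j i) = (if (i, j) \<in> E then K0 * (real j + 1) else 0)"
    "z0 (Ga i) = (if i \<in> nodes N then 1 else 0)" for i j
    by (simp_all add: z0_def)
  have ps: "z0 \<in> pspace N E" unfolding pspace_def
  proof (intro CollectI allI impI)
    fix k assume k: "k \<notin> pindex N E"
    show "z0 k = 0"
    proof (cases k)
      case (Lp j i) then show ?thesis using k pindex_Lp[of i j] by auto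
    next
      case (Up j i) then show ?thesis using k pindex_Up[of i j] by auto
    next
      case (Th j i) then show ?thesis using k pindex_Th[of i j] by auto
    next
      case (Ga i) then show ?thesis using k pindex_Ga[of i] by auto
    qed
  qed
  have po: "pos N E z0"
  proof (rule pos_I)
    fix i j assume ij: "(i, j) \<in> E"
    have "0 < K0 * (real j + 1)" using K0p by simp
    then show "0 < z0 (Lp j i) \<and> z0 (Lp j i) < z0 (Up j i) \<and> 0 < z0 (Th j i)" using ij by simp
  qed simp
  have "holding_eqs N E act ex z0 = {}"
  proof (rule ccontr)
    assume "holding_eqs N E act ex z0 \<noteq> {}"
    then obtain e where e: "e \<in> holding_eqs N E act ex z0" by blast
    have "e \<in> {EqThTh i j j' | i j j'. j \<in> Tgt E i \<and> j' \<in> Tgt E i \<and> j < j' \<and> z0 (Th j i) = z0 (Th j' i)} \<union>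
      {EqFace i j s | i j s. i \<in> nodes N \<and> j \<in> Tgt E i \<and> s \<in> Pat E i \<and> z0 (Ga i) * z0 (Th j i) = LamS ex z0 i s}"
      using HOLD[OF po] e by (rule subsetD)
    then consider (T) i j1 j2 where "j1 \<in> Tgt E i" "j2 \<in> Tgt E i" "j1 < j2" "z0 (Th j1 i) = z0 (Th j2 i)"
      | (Fc) i j s where "i \<in> nodes N" "j \<in> Tgt E i" "s \<in> Pat E i" "z0 (Ga i) * z0 (Th j i) = LamS ex z0 i s"
      by blast
    then show False
    proof cases
      case T
      have "(i, j1) \<in> E" "(i, j2) \<in> E" using T(1,2) by (simp_all add: Tgt_def)
      then have "K0 * (real j1 + 1) = K0 * (real j2 + 1)" using T(4) by simp
      then show False using K0p T(3) by simp
    next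
      case Fc
      have ij: "(i, j) \<in> E" using Fc(2) by (simp add: Tgt_def)
      have "LamS ex z0 i s \<le> evalM (ex i) (\<lambda>_. 2)"
      proof (rule LamS_le[OF Fc(1)])
        fix k assume "k \<in> Src E i"
        then have "(k, i) \<in> E" by (simp add: Src_def)
        then show "0 \<le> z0 (Lp i k) \<and> z0 (Lp i k) \<le> z0 (Up i k) \<and> z0 (Up i k) \<le> 2" by simp
      qed
      also have "\<dots> < K0" by (rule K0b[OF Fc(1)])
      also have "\<dots> \<le> K0 * (real j + 1)" using K0p by (simp add: algebra_simps)
      also have "\<dots> = z0 (Ga i) * z0 (Th j i)" using ij Fc(1) by simp
      finally show False using Fc(4) by simp
    qed
  qed
  then show ?thesis using REG[OF ps po] by blast
qed


lemma CONN:
  assumes z1: "regular N E act ex z1" and z2: "regular N E act ex z2"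
  shows "RG\<^sup>*\<^sup>* (CC z1) (CC z2)"
proof -
  obtain w1 where w1: "regular N E act ex w1" "CC w1 = CC z1" "Ldist w1" "\<forall>i\<in>nodes N. SGi w1 i"
    using GEN[OF z1] by blast
  obtain w2 where w2: "regular N E act ex w2" "CC w2 = CC z2" "Ldist w2" "\<forall>i\<in>nodes N. SGi w2 i"
    using GEN[OF z2] by blast
  have p1: "pos N E w1" by (rule reg_pos[OF w1(1)])
  have p2: "pos N E w2" by (rule reg_pos[OF w2(1)])
  define U where "U i = evalM (ex i) (\<lambda>k. max (w1 (Up i k)) (w2 (Up i k)))" for i
  define m where "m i = min (w1 (Ga i)) (w2 (Ga i))" for i
  define f where "f e = w1 (Th (snd e) (fst e)) + w2 (Th (snd e) (fst e))" for e
  define S1 where "S1 = (\<Sum>e\<in>E. f e)"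
  define S2 where "S2 = (\<Sum>i\<in>nodes N. U i / m i)"
  define K where "K = 1 + S1 + S2"
  have fn: "finite (nodes N)" by (simp add: nodes_def)
  have m0: "0 < m i" if "i \<in> nodes N" for i using pos_G[OF p1 that] pos_G[OF p2 that] by (simp add: m_def)
  have U0: "0 \<le> U i" if "i \<in> nodes N" for i
    unfolding U_def
  proof (rule evalM_nonneg, intro ballI)
    fix k assume "k \<in> set (lvars (ex i))"
    then have "(k, i) \<in> E" using lv(1)[OF that] Src_node by auto
    then show "0 \<le> max (w1 (Up i k)) (w2 (Up i k))" using pos_E[OF p1] by force
  qed
  have f0: "0 \<le> f e" if "e \<in> E" for e
  proof -
    obtain i j where e: "e = (i, j)" by (cases e)
    show ?thesis using pos_E[OF p1, of i j] pos_E[OF p2, of i j] that e by (simp add: f_def)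
  qed
  have S10: "0 \<le> S1" unfolding S1_def by (rule sum_nonneg) (rule f0)
  have S20: "0 \<le> S2" unfolding S2_def
    by (rule sum_nonneg) (use U0 m0 in \<open>simp add: less_imp_le\<close>)
  have K0: "0 < K" using S10 S20 by (simp add: K_def)
  have Kth: "w1 (Th j i) < K \<and> w2 (Th j i) < K" if "(i, j) \<in> E" for i j
  proof -
    have "f (i, j) \<le> S1" unfolding S1_def by (rule member_le_sum[OF that _ finE]) (rule f0; simp)
    then show ?thesis using pos_E[OF p1 that] pos_E[OF p2 that] S20 by (simp add: f_def K_def)
  qed
  have KU: "U i < K * m i" if i: "i \<in> nodes N" for i
  proof -
    have "U i / m i \<le> S2" unfolding S2_def
      by (rule member_le_sum[OF i _ fn]) (use U0 m0 in \<open>simp add: less_imp_le\<close>)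
    then have "U i / m i < K" using S10 by (simp add: K_def)
    then show ?thesis using m0[OF i] by (simp add: pos_divide_less_eq)
  qed
  have LU1: "LamS ex w i s \<le> U i"
    if i: "i \<in> nodes N" and h: "\<And>k. k \<in> Src E i \<Longrightarrow> 0 \<le> w (Lp i k) \<and> w (Lp i k) \<le> w (Up i k) \<and>
       w (Up i k) \<le> max (w1 (Up i k)) (w2 (Up i k))" for w i s
    unfolding U_def by (rule LamS_le[OF i h])
  have KL1: "\<forall>i\<in>nodes N. \<forall>\<sigma>\<in>Pat E i. LamS ex w1 i \<sigma> < w1 (Ga i) * K"
  proof (intro ballI)
    fix i \<sigma> assume i: "i \<in> nodes N" and \<sigma>: "\<sigma> \<in> Pat E i"
    have "LamS ex w1 i \<sigma> \<le> U i"
    proof (rule LU1[OF i])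
      fix k assume "k \<in> Src E i"
      then have ke: "(k, i) \<in> E" by (simp add: Src_def)
      show "0 \<le> w1 (Lp i k) \<and> w1 (Lp i k) \<le> w1 (Up i k) \<and> w1 (Up i k) \<le> max (w1 (Up i k)) (w2 (Up i k))"
        using pos_E[OF p1 ke] by simp
    qed
    also have "\<dots> < K * m i" by (rule KU[OF i])
    also have "\<dots> \<le> K * w1 (Ga i)" by (rule mult_left_mono) (use K0 in \<open>simp_all add: m_def\<close>)
    finally show "LamS ex w1 i \<sigma> < w1 (Ga i) * K" by (simp add: mult.commute)
  qed
  have KL2: "\<forall>i\<in>nodes N. \<forall>\<sigma>\<in>Pat E i. LamS ex w2 i \<sigma> < w2 (Ga i) * K"
  proof (intro ballI)
    fix i \<sigma> assume i: "i \<in> nodes N" and \<sigma>: "\<sigma> \<in> Pat E i"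
    have "LamS ex w2 i \<sigma> \<le> U i"
    proof (rule LU1[OF i])
      fix k assume "k \<in> Src E i"
      then have ke: "(k, i) \<in> E" by (simp add: Src_def)
      show "0 \<le> w2 (Lp i k) \<and> w2 (Lp i k) \<le> w2 (Up i k) \<and> w2 (Up i k) \<le> max (w1 (Up i k)) (w2 (Up i k))"
        using pos_E[OF p2 ke] by simp
    qed
    also have "\<dots> < K * m i" by (rule KU[OF i])
    also have "\<dots> \<le> K * w2 (Ga i)" by (rule mult_left_mono) (use K0 in \<open>simp_all add: m_def\<close>)
    finally show "LamS ex w2 i \<sigma> < w2 (Ga i) * K" by (simp add: mult.commute)
  qed
  have Kth1: "\<forall>(i, j)\<in>E. w1 (Th j i) < K" using Kth by blast
  have Kth2: "\<forall>(i, j)\<in>E. w2 (Th j i) < K" using Kth by blast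
  define y1 where "y1 = thK K w1 E"
  define y2 where "y2 = thK K w2 E"
  have R1: "regular N E act ex y1" "RG\<^sup>*\<^sup>* (CC w1) (CC y1)"
    using RAISE[OF w1(1,3,4) K0 Kth1 KL1] by (simp_all add: y1_def)
  have R2: "regular N E act ex y2" "RG\<^sup>*\<^sup>* (CC w2) (CC y2)"
    using RAISE[OF w2(1,3,4) K0 Kth2 KL2] by (simp_all add: y2_def)
  have th: "\<forall>j i. y2 (Th j i) = y1 (Th j i)"
  proof (intro allI)
    fix j i
    show "y2 (Th j i) = y1 (Th j i)"
    proof (cases "(i, j) \<in> E")
      case True then show ?thesis by (simp add: y1_def y2_def)
    next
      case False
      then have "Th j i \<notin> pindex N E" by (auto simp: pindex_def)
      then have "w1 (Th j i) = 0" "w2 (Th j i) = 0"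
        using reg_ps[OF w1(1)] reg_ps[OF w2(1)] by (auto simp: pspace_def)
      then show ?thesis using False by (simp add: y1_def y2_def)
    qed
  qed
  have py1: "pos N E y1" by (rule reg_pos[OF R1(1)])
  have py2: "pos N E y2" by (rule reg_pos[OF R2(1)])
  have KB: "\<forall>t\<in>{0..1}. \<forall>i\<in>nodes N. \<forall>j\<in>Tgt E i. \<forall>\<sigma>\<in>Pat E i.
      LamS ex (line y1 y2 t) i \<sigma> < line y1 y2 t (Ga i) * y1 (Th j i)"
  proof (intro ballI)
    fix t :: real and i j \<sigma> assume t: "t \<in> {0..1}" and i: "i \<in> nodes N" and j: "j \<in> Tgt E i"
      and \<sigma>: "\<sigma> \<in> Pat E i"
    define q where "q = line y1 y2 t"
    have t01: "0 \<le> t" "t \<le> 1" using t by auto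
    have pq: "pos N E q" unfolding q_def by (rule pos_line[OF py1 py2 t01])
    have "LamS ex q i \<sigma> \<le> U i"
    proof (rule LU1[OF i])
      fix k assume "k \<in> Src E i"
      then have ke: "(k, i) \<in> E" by (simp add: Src_def)
      have "q (Up i k) = w1 (Up i k) + t * (w2 (Up i k) - w1 (Up i k))"
        by (simp add: q_def line_def y1_def y2_def)
      then have "q (Up i k) \<le> max (w1 (Up i k)) (w2 (Up i k))" using conv_le_max[OF t01] by simp
      then show "0 \<le> q (Lp i k) \<and> q (Lp i k) \<le> q (Up i k) \<and> q (Up i k) \<le> max (w1 (Up i k)) (w2 (Up i k))"
        using pos_E[OF pq ke] by simp
    qed
    also have "\<dots> < K * m i" by (rule KU[OF i])
    also have "\<dots> \<le> K * q (Ga i)"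
    proof (rule mult_left_mono)
      have "q (Ga i) = w1 (Ga i) + t * (w2 (Ga i) - w1 (Ga i))"
        by (simp add: q_def line_def y1_def y2_def)
      then show "m i \<le> q (Ga i)" using conv_ge_min[OF t01] by (simp add: m_def)
    qed (use K0 in simp)
    also have "\<dots> \<le> q (Ga i) * (K * (real j + 1))"
    proof -
      have "0 < q (Ga i)" by (rule pos_G[OF pq i])
      moreover have "K \<le> K * (real j + 1)" using K0 by (simp add: algebra_simps)
      ultimately have "q (Ga i) * K \<le> q (Ga i) * (K * (real j + 1))"
        by (intro mult_left_mono) simp_all
      then show ?thesis by (simp add: mult.commute)
    qed
    also have "\<dots> = q (Ga i) * y1 (Th j i)" using j by (simp add: y1_def Tgt_def)
    finally show "LamS ex (line y1 y2 t) i \<sigma> < line y1 y2 t (Ga i) * y1 (Th j i)" by (simp add: q_def)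
  qed
  have mid: "CC y2 = CC y1" by (rule MID[OF R1(1) R2(1) th KB])
  have "RG\<^sup>*\<^sup>* (CC y2) (CC w2)" by (rule RG_rsym[OF R2(2)])
  then have "RG\<^sup>*\<^sup>* (CC y1) (CC w2)" using mid by simp
  then have "RG\<^sup>*\<^sup>* (CC w1) (CC w2)" using R1(2) by (rule rtranclp_trans[rotated])
  then show ?thesis using w1(2) w2(2) by simp
qed

theorem MAIN: "GPG_connected N E act ex"
  unfolding GPG_connected_def
proof (intro conjI ballI)
  obtain z0 where "regular N E act ex z0" using EXIST by blast
  then show "GPG_vertices N E act ex \<noteq> {}" using CC_vert by blast
next
  fix C1 C2 assume C1: "C1 \<in> GPG_vertices N E act ex" and C2: "C2 \<in> GPG_vertices N E act ex"
  obtain z1 where z1: "C1 = CC z1" "regular N E act ex z1"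
    using C1 unfolding GPG_vertices_def Zreg_def by blast
  obtain z2 where z2: "C2 = CC z2" "regular N E act ex z2"
    using C2 unfolding GPG_vertices_def Zreg_def by blast
  show "RG\<^sup>*\<^sup>* C1 C2" using CONN[OF z1(2) z2(2)] z1(1) z2(1) by simp
qed

end

theorem proposition4p4:
  fixes N :: nat and E :: "(nat \<times> nat) set"
    and act :: "nat \<times> nat \<Rightarrow> bool" and ex :: "nat \<Rightarrow> lexpr"
  assumes "wf_network N E act ex"
  shows "GPG_connected N E act ex"
proof -
  interpret net N E act ex by unfold_locales (rule assms)
  show ?thesis by (rule MAIN)
qed


end
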